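(* Let $\Sigma$ and $\Sigma'$ be projective fans in $\mathbb R^n$ such that $\Sigma'$ is a refinement of $\Sigma$ and $\Sigma(1)=\Sigma'(1)$. Given a simplicial coloring $\Sigma(1)=\Lambda_0\cup\dots\cup\Lambda_n$ of $\Sigma$, the same decomposition is a simplicial coloring of $\Sigma'$, and the two colorings have the same combinatorial degree.
   Context: $\Sigma'$ refines $\Sigma$ means every cone of $\Sigma'$ is contained in a cone of $\Sigma$ and both fans have the same support. A projective fan is the normal fan of a convex $n$-polytope. Let $\Delta\subset\mathbb R^{n+1}$ be the standard $n$-simplex with faces $\Delta_{i_1\dots i_k}=\{y\in\Delta: y_{i_1}=\dots=y_{i_k}=0\}$. A coloring of a fan $\Sigma$ is a decomposition $\Sigma(1)=\Lambda_0\cup\dots\cup\Lambda_n$ (not necessarily disjoint) of its rays into $n+1$ color sets; it is simplicial if no maximal cone contains rays of all $n+1$ colors. For a polytope $P$ with normal fan $\Sigma$, color each facet by the colors of its inner normal ray; this gives closed sets $C_i$ (union of facets of color $i$) with $\bigcup C_i=\partial P$, $\bigcap C_i=\emptyset$, and an order-preserving map $\psi_C$ from proper faces of $P$ to proper faces of $\Delta$, $\psi_C(G)=\Delta_{i_1\dots i_k}$ where $G\subset C_{i_1}\cap\dots\cap C_{i_k}$ with $k$ maximal. The combinatorial degree of the coloring is the integer by which $H_{n-1}(f):H_{n-1}(\partial P)\to H_{n-1}(\partial\Delta)$ acts (with respect to fixed orientations of $\mathbb R^n$ and $\Delta$), for any continuous $f$ with $f(G)\subset\psi_C(G)$ for all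 faces $G$; it is independent of $f$ and of the choice of $P$. *)

theory Defs
  imports "HOL-Analysis.Analysis" "HOL-Homology.Homology"
begin

definition full_polytope :: "(real^'n) set \<Rightarrow> bool" where
  "full_polytope P \<longleftrightarrow> polytope P \<and> aff_dim P = int CARD('n)"

definition normal_cone :: "(real^'n) set \<Rightarrow> (real^'n) set \<Rightarrow> (real^'n) set" where
  "normal_cone P F = {u. \<forall>y\<in>F. \<forall>x\<in>P. inner u y \<le> inner u x}"

definition normal_fan :: "(real^'n) set \<Rightarrow> (real^'n) set set" where
  "normal_fan P = {normal_cone P F | F. F face_of P \<and> F \<noteq> {}}"

definition projective_fan :: "(real^'n) set set \<Rightarrow> bool" where
  "projective_fan S \<longleftrightarrow> (\<exists>P. full_polytope P \<and> S = normal_fan P)"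

definition fan_rays :: "(real^'n) set set \<Rightarrow> (real^'n) set set" where
  "fan_rays S = {\<sigma> \<in> S. aff_dim \<sigma> = 1}"

definition maximal_cones :: "(real^'n) set set \<Rightarrow> (real^'n) set set" where
  "maximal_cones S = {\<sigma> \<in> S. \<not> (\<exists>\<tau>\<in>S. \<sigma> \<subset> \<tau>)}"

definition fan_refines :: "(real^'n) set set \<Rightarrow> (real^'n) set set \<Rightarrow> bool" where
  "fan_refines S' S \<longleftrightarrow> (\<forall>\<sigma>'\<in>S'. \<exists>\<sigma>\<in>S. \<sigma>' \<subseteq> \<sigma>) \<and> \<Union>S' = \<Union>S"

definition coloring :: "(real^'n) set set \<Rightarrow> (nat \<Rightarrow> (real^'n) set set) \<Rightarrow> bool" where
  "coloring S L \<longleftrightarrow> (\<Union>i\<in>{..CARD('n)}. L i) = fan_rays S"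

definition simplicial_coloring :: "(real^'n) set set \<Rightarrow> (nat \<Rightarrow> (real^'n) set set) \<Rightarrow> bool" where
  "simplicial_coloring S L \<longleftrightarrow> coloring S L \<and>
     (\<forall>\<sigma>\<in>maximal_cones S. \<not> (\<forall>i\<in>{..CARD('n)}. \<exists>\<rho>\<in>L i. \<rho> \<subseteq> \<sigma>))"

text \<open>The standard n-simplex in R^{n+1} is \<open>standard_simplex n\<close> (coordinates 0..n).
  Its boundary and its faces Delta_I:\<close>
definition simplex_boundary :: "nat \<Rightarrow> (nat \<Rightarrow> real) set" where
  "simplex_boundary n = {y \<in> standard_simplex n. \<exists>i\<le>n. y i = 0}"

definition simplex_face :: "nat \<Rightarrow> nat set \<Rightarrow> (nat \<Rightarrow> real) set" where
  "simplex_face n I = {y \<in> standard_simplex n. \<forall>i\<in>I. y i = 0}"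

definition color_set :: "(real^'n) set \<Rightarrow> (nat \<Rightarrow> (real^'n) set set) \<Rightarrow> nat \<Rightarrow> (real^'n) set" where
  "color_set P L i = \<Union>{G. G facet_of P \<and> normal_cone P G \<in> L i}"

definition psi_C :: "(real^'n) set \<Rightarrow> (nat \<Rightarrow> (real^'n) set set) \<Rightarrow> (real^'n) set \<Rightarrow> (nat \<Rightarrow> real) set" where
  "psi_C P L G = simplex_face CARD('n) {i. i \<le> CARD('n) \<and> G \<subseteq> color_set P L i}"

definition compatible_map :: "(real^'n) set \<Rightarrow> (nat \<Rightarrow> (real^'n) set set) \<Rightarrow> ((real^'n) \<Rightarrow> (nat \<Rightarrow> real)) \<Rightarrow> bool" where
  "compatible_map P L f \<longleftrightarrow>
     continuous_map (top_of_set (frontier P))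
        (subtopology (powertop_real UNIV) (simplex_boundary CARD('n))) f \<and>
     (\<forall>G. G face_of P \<and> G \<noteq> {} \<and> G \<noteq> P \<longrightarrow> f ` G \<subseteq> psi_C P L G)"

text \<open>Fixed orientation of R^n: a fixed enumeration of the coordinate index type.\<close>
definition coord_enum :: "nat \<Rightarrow> 'n::finite" where
  "coord_enum = (SOME e. bij_betw e {..<CARD('n)} (UNIV :: 'n set))"

text \<open>Chart boundary P -> S^{n-1}: radial projection from a fixed interior point,
  read in the fixed coordinates (orientation of R^n).\<close>
definition polytope_chart :: "(real^'n) set \<Rightarrow> (real^'n) \<Rightarrow> (nat \<Rightarrow> real)" where
  "polytope_chart P x =
     (let c = (SOME c. c \<in> interior P) in
      (\<lambda>i. if i < CARD('n) then ((x - c) $ coord_enum i) / norm (x - c) else 0))"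

text \<open>Chart boundary Delta -> S^{n-1}: drop coordinate 0 (a linear isomorphism of the
  affine hull of Delta onto R^n) and project radially from the barycenter
  (fixed orientation of Delta).\<close>
definition simplex_chart :: "nat \<Rightarrow> (nat \<Rightarrow> real) \<Rightarrow> (nat \<Rightarrow> real)" where
  "simplex_chart n y =
     (let L = sqrt (\<Sum>i<n. (y (Suc i) - 1 / real (Suc n))\<^sup>2) in
      (\<lambda>i. if i < n then (y (Suc i) - 1 / real (Suc n)) / L else 0))"

text \<open>The integer by which H_{n-1}(f) acts, computed as a Brouwer degree on S^{n-1}
  (reduced homology, which agrees with homology in degree n-1 for n \<ge> 2).\<close>
definition comb_degree :: "(real^'n) set \<Rightarrow> ((real^'n) \<Rightarrow> (nat \<Rightarrow> real)) \<Rightarrow> int" where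
  "comb_degree P f =
     Brouwer_degree2 (CARD('n) - 1)
       (simplex_chart CARD('n) \<circ> f \<circ> inv_into (frontier P) (polytope_chart P))"

end

theory Submission
  imports Defs
begin

definition rv :: "(real^'n) set \<Rightarrow> real^'n" where
  "rv \<rho> = (SOME a. a \<in> \<rho> \<and> a \<noteq> 0)"

definition mP :: "(real^'n) set \<Rightarrow> real^'n \<Rightarrow> real" where
  "mP P v = Inf ((\<lambda>x. v \<bullet> x) ` P)"

lemma fp_basic:
  fixes P :: "(real^'n) set"
  assumes "full_polytope P"
  shows "compact P" "convex P" "P \<noteq> {}" "affine hull P = UNIV" "interior P \<noteq> {}"
    "polyhedron P" "rel_interior P = interior P" "bounded P" "closed P"
proof -
  have pol: "polytope P" and ad: "aff_dim P = int CARD('n)"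
    using assms by (auto simp: full_polytope_def)
  show "compact P" using pol polytope_imp_compact by blast
  show cv: "convex P" using pol polytope_imp_convex by blast
  show "bounded P" using pol polytope_imp_bounded by blast
  show "closed P" using pol polytope_imp_closed by blast
  show ne: "P \<noteq> {}" using ad by auto
  show ah: "affine hull P = UNIV" using ad aff_dim_eq_full[of P] by simp
  show ri: "rel_interior P = interior P" using ah rel_interior_interior by blast
  show "interior P \<noteq> {}" using ri rel_interior_eq_empty cv ne by blast
  show "polyhedron P" using pol polytope_imp_polyhedron by blast
qed

lemma mP_le:
  fixes P :: "(real^'n) set"
  assumes "compact P" "x \<in> P"
  shows "mP P v \<le> v \<bullet> x"
proof -
  have "continuous_on P (\<lambda>x. v \<bullet> x)" by (intro continuous_intros)
  then have "bounded ((\<lambda>x. v \<bullet> x) ` P)"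
    using assms compact_continuous_image compact_imp_bounded by blast
  then have "bdd_below ((\<lambda>x. v \<bullet> x) ` P)" by (rule bounded_imp_bdd_below)
  then show ?thesis unfolding mP_def using assms(2) by (auto intro: cInf_lower)
qed

lemma mP_attained:
  fixes P :: "(real^'n) set"
  assumes "compact P" "P \<noteq> {}"
  obtains x where "x \<in> P" "v \<bullet> x = mP P v"
proof -
  have "continuous_on P (\<lambda>x. v \<bullet> x)" by (intro continuous_intros)
  then obtain x where x: "x \<in> P" "\<forall>y\<in>P. v \<bullet> x \<le> v \<bullet> y"
    using continuous_attains_inf[OF assms] by blast
  have "mP P v = v \<bullet> x" unfolding mP_def using x by (intro cInf_eq_minimum) auto
  then show ?thesis using that x by auto
qed

lemma mP_eqI:
  fixes P :: "(real^'n) set"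
  assumes "x \<in> P" "\<And>y. y \<in> P \<Longrightarrow> v \<bullet> x \<le> v \<bullet> y"
  shows "mP P v = v \<bullet> x"
  unfolding mP_def using assms by (intro cInf_eq_minimum) auto

lemma interior_strict:
  fixes P :: "(real^'n) set"
  assumes "full_polytope P" "c \<in> interior P" "v \<noteq> 0"
  shows "mP P v < v \<bullet> c"
proof -
  obtain e where e: "e > 0" "ball c e \<subseteq> P" using assms(2) by (meson mem_interior)
  define z where "z = c - (e / 2 / norm v) *\<^sub>R v"
  have "dist c z < e" using e assms(3) by (simp add: z_def dist_norm)
  then have "z \<in> P" using e by auto
  then have "mP P v \<le> v \<bullet> z" using mP_le fp_basic(1)[OF assms(1)] by blast
  also have "v \<bullet> z = v \<bullet> c - (e/2) * norm v"
    using assms(3) by (simp add: z_def inner_diff_right power2_norm_eq_inner[symmetric] power2_eq_square)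
  also have "\<dots> < v \<bullet> c" using e assms(3) by simp
  finally show ?thesis .
qed

lemma ray_aff_dim:
  fixes a :: "real^'n"
  assumes "a \<noteq> 0"
  shows "aff_dim {t *\<^sub>R a | t. 0 \<le> t} = 1"
proof -
  let ?R = "{t *\<^sub>R a | t. 0 \<le> t}"
  have "0 \<in> ?R" by (metis (mono_tags, lifting) mem_Collect_eq order_refl scale_zero_left)
  moreover have "a \<in> ?R" by (metis (mono_tags, lifting) mem_Collect_eq zero_le_one scale_one)
  ultimately have s1: "{0, a} \<subseteq> ?R" by blast
  have s2: "?R \<subseteq> affine hull {0, a}"
  proof
    fix x assume "x \<in> ?R"
    then obtain t where "x = t *\<^sub>R a" by auto
    then have "x = (1 - t) *\<^sub>R 0 + t *\<^sub>R a" by simp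
    then show "x \<in> affine hull {0, a}" unfolding affine_hull_2
      by (intro CollectI exI[of _ "1 - t"] exI[of _ t]) simp
  qed
  have "aff_dim {0, a} \<le> aff_dim ?R" using s1 aff_dim_subset by blast
  moreover have "aff_dim ?R \<le> aff_dim (affine hull {0, a})" using s2 aff_dim_subset by blast
  ultimately show ?thesis using assms by (simp split: if_splits)
qed

lemma nc_facet:
  fixes P :: "(real^'n) set"
  assumes full: "full_polytope P" and a0: "a \<noteq> 0" and sub: "P \<subseteq> {x. a \<bullet> x \<le> b}"
    and Feq: "F = P \<inter> {x. a \<bullet> x = b}" and fac: "F facet_of P"
  shows "normal_cone P F = {t *\<^sub>R (-a) | t. 0 \<le> t}"
proof
  show "{t *\<^sub>R (-a) | t. 0 \<le> t} \<subseteq> normal_cone P F"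
  proof
    fix u assume "u \<in> {t *\<^sub>R (-a) | t. 0 \<le> t}"
    then obtain t where t: "0 \<le> t" "u = t *\<^sub>R (-a)" by auto
    show "u \<in> normal_cone P F"
      unfolding normal_cone_def
    proof (intro CollectI ballI)
      fix y x assume "y \<in> F" "x \<in> P"
      then have "a \<bullet> y = b" "a \<bullet> x \<le> b" using Feq sub by auto
      then show "u \<bullet> y \<le> u \<bullet> x" using t by (simp add: mult_left_mono)
    qed
  qed
next
  show "normal_cone P F \<subseteq> {t *\<^sub>R (-a) | t. 0 \<le> t}"
  proof
    fix u assume u: "u \<in> normal_cone P F"
    have Fne: "F \<noteq> {}" and adF: "aff_dim F = aff_dim P - 1" and FP: "F \<subseteq> P"
      using fac by (auto simp: facet_of_def face_of_def)
    then obtain y0 where y0: "y0 \<in> F" by blast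
    have uineq: "\<And>y x. y \<in> F \<Longrightarrow> x \<in> P \<Longrightarrow> u \<bullet> y \<le> u \<bullet> x"
      using u unfolding normal_cone_def by blast
    have const: "\<And>y. y \<in> F \<Longrightarrow> u \<bullet> y = u \<bullet> y0"
      using uineq y0 FP by (meson antisym subsetD)
    have ay0: "a \<bullet> y0 = b" using y0 Feq by auto
    define s where "s = (u \<bullet> a) / (a \<bullet> a)"
    define w where "w = u - s *\<^sub>R a"
    have aa: "a \<bullet> a \<noteq> 0" using a0 by simp
    have wa: "a \<bullet> w = 0" using aa by (simp add: w_def s_def inner_diff_right inner_commute)
    have w0: "w = 0"
    proof (rule ccontr)
      assume wne: "w \<noteq> 0"
      let ?H1 = "{x. a \<bullet> x = b}"
      let ?H2 = "{x. w \<bullet> x = w \<bullet> y0}"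
      have "F \<subseteq> ?H1 \<inter> ?H2"
      proof
        fix y assume y: "y \<in> F"
        then have ay: "a \<bullet> y = b" using Feq by auto
        have "w \<bullet> y = u \<bullet> y - s * (a \<bullet> y)" by (simp add: w_def inner_diff_left)
        also have "\<dots> = u \<bullet> y0 - s * (a \<bullet> y0)" using const[OF y] ay ay0 by simp
        also have "\<dots> = w \<bullet> y0" by (simp add: w_def inner_diff_left)
        finally show "y \<in> ?H1 \<inter> ?H2" using ay by simp
      qed
      then have le: "aff_dim F \<le> aff_dim (?H1 \<inter> ?H2)" by (rule aff_dim_subset)
      have ne: "?H1 \<inter> ?H2 \<noteq> {}" using y0 ay0 by auto
      have nsub: "\<not> ?H1 \<subseteq> ?H2"
      proof
        assume "?H1 \<subseteq> ?H2"
        moreover have "y0 + w \<in> ?H1" using ay0 wa by (simp add: inner_add_right)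
        ultimately have "w \<bullet> (y0 + w) = w \<bullet> y0" by auto
        then have "w \<bullet> w = 0" by (simp add: inner_add_right)
        then show False using wne by simp
      qed
      have "aff_dim (?H1 \<inter> ?H2) = aff_dim ?H1 - 1"
        using aff_dim_affine_Int_hyperplane[of ?H1 w "w \<bullet> y0"] ne nsub affine_hyperplane by auto
      also have "aff_dim ?H1 = int CARD('n) - 1" using a0 by simp
      finally have "aff_dim (?H1 \<inter> ?H2) = int CARD('n) - 2" by simp
      moreover have "aff_dim P = int CARD('n)" using full by (simp add: full_polytope_def)
      ultimately show False using le adF by simp
    qed
    then have ueq: "u = s *\<^sub>R a" by (simp add: w_def)
    obtain c where c: "c \<in> interior P" using fp_basic(5)[OF full] by blast
    have cP: "c \<in> P" using c interior_subset by blast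
    have "mP P (-a) = (-a) \<bullet> y0"
      using y0 FP Feq sub by (intro mP_eqI) auto
    moreover have "mP P (-a) < (-a) \<bullet> c" using interior_strict[OF full c, of "-a"] a0 by simp
    ultimately have ac: "a \<bullet> c < b" using ay0 by simp
    have "u \<bullet> y0 \<le> u \<bullet> c" using uineq y0 cP by blast
    then have "s * b \<le> s * (a \<bullet> c)" using ueq ay0 by simp
    then have "s \<le> 0" using ac by (metis mult_le_cancel_left not_le)
    then show "u \<in> {t *\<^sub>R (-a) | t. 0 \<le> t}" using ueq
      by (intro CollectI exI[of _ "-s"]) auto
  qed
qed

lemma normal_cone_cone:
  assumes "x \<in> normal_cone P G" "0 \<le> t"
  shows "t *\<^sub>R x \<in> normal_cone P G"
  using assms unfolding normal_cone_def by (auto intro: mult_left_mono)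

lemma ray_of_fan:
  fixes P :: "(real^'n) set"
  assumes full: "full_polytope P" and rho: "\<rho> \<in> normal_fan P" and ad: "aff_dim \<rho> = 1"
  shows "rv \<rho> \<in> \<rho>" "rv \<rho> \<noteq> 0" "\<rho> = {t *\<^sub>R rv \<rho> | t. 0 \<le> t}"
proof -
  obtain G where G: "\<rho> = normal_cone P G" "G face_of P" "G \<noteq> {}"
    using rho unfolding normal_fan_def by blast
  have z: "0 \<in> \<rho>" using G by (simp add: normal_cone_def)
  have "\<exists>a. a \<in> \<rho> \<and> a \<noteq> 0"
  proof (rule ccontr)
    assume "\<not> ?thesis"
    then have "\<rho> = {0}" using z by auto
    then show False using ad by simp
  qed
  then have rvp: "rv \<rho> \<in> \<rho> \<and> rv \<rho> \<noteq> 0" unfolding rv_def by (rule someI_ex)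
  then show "rv \<rho> \<in> \<rho>" "rv \<rho> \<noteq> 0" by auto
  define a where "a = rv \<rho>"
  have a: "a \<in> \<rho>" "a \<noteq> 0" using rvp by (auto simp: a_def)
  show "\<rho> = {t *\<^sub>R rv \<rho> | t. 0 \<le> t}"
  proof
    show "{t *\<^sub>R rv \<rho> | t. 0 \<le> t} \<subseteq> \<rho>"
      using normal_cone_cone[of "rv \<rho>" P G] rvp G by auto
  next
    show "\<rho> \<subseteq> {t *\<^sub>R rv \<rho> | t. 0 \<le> t}"
    proof
      fix u assume u: "u \<in> \<rho>"
      have "{0, a} \<subseteq> \<rho>" using z a by auto
      moreover have "aff_dim {0, a} = aff_dim \<rho>" using a ad by simp
      ultimately have "affine hull {0, a} = affine hull \<rho>" using aff_dim_eq_full_gen by blast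
      moreover have "u \<in> affine hull \<rho>" using u by (simp add: hull_inc)
      ultimately have "u \<in> affine hull {0, a}" by simp
      then obtain p q where pq: "u = p *\<^sub>R 0 + q *\<^sub>R a" unfolding affine_hull_2 by blast
      then have uq: "u = q *\<^sub>R a" by simp
      show "u \<in> {t *\<^sub>R rv \<rho> | t. 0 \<le> t}"
      proof (cases "0 \<le> q")
        case True then show ?thesis using uq by (auto simp: a_def)
      next
        case False
        have q0: "0 \<le> 1 / (-q)" using False by simp
        have "(1 / (-q)) *\<^sub>R u \<in> \<rho>" using normal_cone_cone[OF _ q0, of u P G] u G by simp
        moreover have "(1 / (-q)) *\<^sub>R u = -a" using uq False by simp
        ultimately have na: "-a \<in> \<rho>" by simp
        obtain y where y: "y \<in> G" using G by blast
        have GP: "G \<subseteq> P" using G face_of_imp_subset by blast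
        have eq: "\<And>z. z \<in> P \<Longrightarrow> a \<bullet> z = a \<bullet> y"
        proof -
          fix z assume "z \<in> P"
          then have "a \<bullet> y \<le> a \<bullet> z" "(-a) \<bullet> y \<le> (-a) \<bullet> z"
            using a na y G unfolding normal_cone_def by blast+
          then show "a \<bullet> z = a \<bullet> y" by simp
        qed
        obtain c where c: "c \<in> interior P" using fp_basic(5)[OF full] by blast
        obtain e where e: "e > 0" "ball c e \<subseteq> P" using c by (meson mem_interior)
        define z where "z = c + (e / 2 / norm a) *\<^sub>R a"
        have "dist c z < e" using e a by (simp add: z_def dist_norm)
        then have zP: "z \<in> P" using e by auto
        have cP: "c \<in> P" using e by (simp add: subset_eq)
        have "a \<bullet> z = a \<bullet> c + (e/2) * norm a"
          using a by (simp add: z_def inner_add_right power2_norm_eq_inner[symmetric] power2_eq_square)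
        then show ?thesis using eq[OF zP] eq[OF cP] e a by simp
      qed
    qed
  qed
qed

lemma facet_normal_cone:
  fixes P :: "(real^'n) set"
  assumes full: "full_polytope P" and fac: "F facet_of P"
  shows "normal_cone P F \<in> fan_rays (normal_fan P)"
proof -
  obtain a b where ab: "a \<noteq> 0" "P \<subseteq> {x. a \<bullet> x \<le> b}" "F = P \<inter> {x. a \<bullet> x = b}"
    using facet_of_polyhedron[OF fp_basic(6)[OF full] fac] by blast
  have "normal_cone P F = {t *\<^sub>R (-a) | t. 0 \<le> t}" using nc_facet[OF full ab fac] .
  moreover have "aff_dim {t *\<^sub>R (-a) | t. 0 \<le> t} = 1" using ab ray_aff_dim[of "-a"] by simp
  moreover have "normal_cone P F \<in> normal_fan P"
    using fac unfolding normal_fan_def facet_of_def by blast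
  ultimately show ?thesis unfolding fan_rays_def by simp
qed

lemma facet_tight:
  fixes P :: "(real^'n) set"
  assumes full: "full_polytope P" and fac: "F facet_of P" and x: "x \<in> F"
  shows "rv (normal_cone P F) \<bullet> x = mP P (rv (normal_cone P F))"
proof -
  let ?\<rho> = "normal_cone P F"
  have "?\<rho> \<in> fan_rays (normal_fan P)" using facet_normal_cone[OF full fac] .
  then have "rv ?\<rho> \<in> ?\<rho>" using ray_of_fan[OF full] unfolding fan_rays_def by blast
  then have "\<And>z. z \<in> P \<Longrightarrow> rv ?\<rho> \<bullet> x \<le> rv ?\<rho> \<bullet> z" using x unfolding normal_cone_def by blast
  moreover have "x \<in> P" using x fac facet_of_imp_subset by blast
  ultimately show ?thesis using mP_eqI by metis
qed

lemma finite_fan: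
  fixes P :: "(real^'n) set"
  assumes full: "full_polytope P"
  shows "finite (normal_fan P)"
proof -
  have "normal_fan P = (\<lambda>F. normal_cone P F) ` {F. F face_of P \<and> F \<noteq> {}}"
    unfolding normal_fan_def by blast
  moreover have "finite {F. F face_of P}"
    using finite_polytope_faces full unfolding full_polytope_def by blast
  ultimately show ?thesis by simp
qed

lemma Hrep:
  fixes P :: "(real^'n) set"
  assumes full: "full_polytope P"
  shows "P = {x. \<forall>\<rho>\<in>fan_rays (normal_fan P). mP P (rv \<rho>) \<le> rv \<rho> \<bullet> x}"
proof
  show "P \<subseteq> {x. \<forall>\<rho>\<in>fan_rays (normal_fan P). mP P (rv \<rho>) \<le> rv \<rho> \<bullet> x}"
    using mP_le fp_basic(1)[OF full] by blast
next
  show "{x. \<forall>\<rho>\<in>fan_rays (normal_fan P). mP P (rv \<rho>) \<le> rv \<rho> \<bullet> x} \<subseteq> P"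
  proof
    fix x assume x: "x \<in> {x. \<forall>\<rho>\<in>fan_rays (normal_fan P). mP P (rv \<rho>) \<le> rv \<rho> \<bullet> x}"
    have ah: "affine hull P = UNIV" using fp_basic(4)[OF full] .
    obtain H where "finite H" and seq: "P = affine hull P \<inter> \<Inter>H"
       and faces: "\<And>h. h \<in> H \<Longrightarrow> \<exists>a b. a \<noteq> 0 \<and> h = {x. a \<bullet> x \<le> b}"
       and min: "\<And>F'. F' \<subset> H \<Longrightarrow> P \<subset> (affine hull P) \<inter> \<Inter>F'"
      using fp_basic(6)[OF full] by (simp add: polyhedron_Int_affine_minimal) meson
    then obtain a b where ab: "\<And>h. h \<in> H \<Longrightarrow> a h \<noteq> 0 \<and> h = {x. a h \<bullet> x \<le> b h}"
      by metis
    have "x \<in> h" if h: "h \<in> H" for h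
    proof -
      define F where "F = P \<inter> {x. a h \<bullet> x = b h}"
      have fac: "F facet_of P"
        using facet_of_polyhedron_explicit[OF \<open>finite H\<close> seq ab min] h F_def by blast
      have sub: "P \<subseteq> {x. a h \<bullet> x \<le> b h}" using h ab seq by blast
      have nc: "normal_cone P F = {t *\<^sub>R (- a h) | t. 0 \<le> t}"
        using nc_facet[OF full _ sub F_def fac] ab h by blast
      let ?\<rho> = "normal_cone P F"
      have rr: "?\<rho> \<in> fan_rays (normal_fan P)" using facet_normal_cone[OF full fac] .
      then have "rv ?\<rho> \<in> ?\<rho>" "rv ?\<rho> \<noteq> 0" using ray_of_fan[OF full] unfolding fan_rays_def by blast+
      then obtain t where t: "0 \<le> t" "rv ?\<rho> = t *\<^sub>R (- a h)" using nc by auto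
      then have tp: "0 < t" using \<open>rv ?\<rho> \<noteq> 0\<close> by (cases "t = 0") auto
      obtain y0 where y0: "y0 \<in> F" using fac unfolding facet_of_def by blast
      have "mP P (rv ?\<rho>) = rv ?\<rho> \<bullet> y0" using facet_tight[OF full fac y0] by simp
      also have "\<dots> = - t * b h" using y0 t by (simp add: F_def)
      finally have "- t * b h \<le> rv ?\<rho> \<bullet> x" using x rr by auto
      then have "- t * b h \<le> - t * (a h \<bullet> x)" using t by simp
      then have "a h \<bullet> x \<le> b h" using tp by simp
      then show "x \<in> h" using ab h by blast
    qed
    then show "x \<in> P" using seq ah by blast
  qed
qed

lemma frontier_facet:
  fixes P :: "(real^'n) set"
  assumes full: "full_polytope P" and x: "x \<in> frontier P"
  obtains F where "F facet_of P" "x \<in> F"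
proof -
  have "frontier P = P - rel_interior P"
    using fp_basic[OF full] by (simp add: frontier_def closure_closed)
  then show ?thesis using rel_boundary_of_polyhedron[OF fp_basic(6)[OF full]] x that by blast
qed

lemma bounded_dir:
  fixes P :: "(real^'n) set"
  assumes full: "full_polytope P" and y: "y \<noteq> 0"
  shows "\<exists>\<rho>\<in>fan_rays (normal_fan P). rv \<rho> \<bullet> y < 0"
proof (rule ccontr)
  assume "\<not> ?thesis"
  then have ge: "\<forall>\<rho>\<in>fan_rays (normal_fan P). 0 \<le> rv \<rho> \<bullet> y" by (auto simp: not_less)
  obtain x0 where x0: "x0 \<in> P" using fp_basic(3)[OF full] by blast
  have inP: "x0 + s *\<^sub>R y \<in> P" if s: "0 \<le> s" for s
  proof -
    have "\<forall>\<rho>\<in>fan_rays (normal_fan P). mP P (rv \<rho>) \<le> rv \<rho> \<bullet> (x0 + s *\<^sub>R y)"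
    proof
      fix \<rho> assume r: "\<rho> \<in> fan_rays (normal_fan P)"
      have "mP P (rv \<rho>) \<le> rv \<rho> \<bullet> x0" using mP_le fp_basic(1)[OF full] x0 by blast
      moreover have "0 \<le> s * (rv \<rho> \<bullet> y)" using s ge r by simp
      ultimately show "mP P (rv \<rho>) \<le> rv \<rho> \<bullet> (x0 + s *\<^sub>R y)" by (simp add: inner_add_right)
    qed
    then show ?thesis using Hrep[OF full] by blast
  qed
  obtain B where B: "\<forall>x\<in>P. norm x \<le> B" using fp_basic(8)[OF full] bounded_iff by blast
  define s where "s = (B + norm x0 + 1) / norm y"
  have B0: "0 \<le> B" using B x0 norm_ge_zero order_trans by blast
  then have s0: "0 \<le> s" by (simp add: s_def)
  have "norm (s *\<^sub>R y) = B + norm x0 + 1" using y B0 by (simp add: s_def)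
  moreover have "norm (s *\<^sub>R y) \<le> norm (x0 + s *\<^sub>R y) + norm x0"
    by (metis add.commute add_diff_cancel_left' norm_triangle_ineq4)
  moreover have "norm (x0 + s *\<^sub>R y) \<le> B" using B inP[OF s0] by blast
  ultimately show False by simp
qed

lemma exists_maximal:
  assumes "finite S" "\<sigma> \<in> S"
  shows "\<exists>\<tau>\<in>maximal_cones S. \<sigma> \<subseteq> \<tau>"
proof -
  let ?A = "{\<tau>\<in>S. \<sigma> \<subseteq> \<tau>}"
  have f: "finite ?A" using assms(1) by simp
  have ne: "?A \<noteq> {}" using assms(2) by blast
  obtain m where m: "m \<in> ?A" "\<forall>b\<in>?A. m \<le> b \<longrightarrow> m = b"
    using finite_has_maximal[OF f ne] by blast
  have "m \<in> maximal_cones S"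
    unfolding maximal_cones_def using m by auto
  then show ?thesis using m by blast
qed
lemma first_conj:
  fixes S S' :: "(real^'n) set set"
  assumes "finite S" "fan_refines S' S" "fan_rays S = fan_rays S'" "simplicial_coloring S L"
    and exm: "\<And>\<sigma>. \<sigma> \<in> S \<Longrightarrow> \<exists>\<tau>\<in>maximal_cones S. \<sigma> \<subseteq> \<tau>"
  shows "simplicial_coloring S' L"
  unfolding simplicial_coloring_def
proof (intro conjI ballI)
  show "coloring S' L" using assms(3,4) by (simp add: simplicial_coloring_def coloring_def)
next
  fix \<sigma>' assume s: "\<sigma>' \<in> maximal_cones S'"
  then have "\<sigma>' \<in> S'" by (simp add: maximal_cones_def)
  then obtain \<sigma> where "\<sigma> \<in> S" "\<sigma>' \<subseteq> \<sigma>" using assms(2) unfolding fan_refines_def by blast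
  then obtain \<tau> where \<tau>: "\<tau> \<in> maximal_cones S" "\<sigma>' \<subseteq> \<tau>" using exm by (meson order_trans)
  then have nt: "\<not> (\<forall>i\<in>{..CARD('n)}. \<exists>\<rho>\<in>L i. \<rho> \<subseteq> \<tau>)" using assms(4) unfolding simplicial_coloring_def by blast
  show "\<not> (\<forall>i\<in>{..CARD('n)}. \<exists>\<rho>\<in>L i. \<rho> \<subseteq> \<sigma>')"
  proof
    assume all: "\<forall>i\<in>{..CARD('n)}. \<exists>\<rho>\<in>L i. \<rho> \<subseteq> \<sigma>'"
    have "\<forall>i\<in>{..CARD('n)}. \<exists>\<rho>\<in>L i. \<rho> \<subseteq> \<tau>"
    proof
      fix i assume "i \<in> {..CARD('n)}"
      then obtain \<rho> where "\<rho> \<in> L i" "\<rho> \<subseteq> \<sigma>'" using all by blast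
      then show "\<exists>\<rho>\<in>L i. \<rho> \<subseteq> \<tau>" using \<tau>(2) by blast
    qed
    then show False using nt by blast
  qed
qed

lemma vertex_color:
  fixes P :: "(real^'n) set"
  assumes full: "full_polytope P" and v: "{v} face_of P" and sc: "simplicial_coloring (normal_fan P) L"
    and exm: "\<And>\<sigma>. \<sigma> \<in> normal_fan P \<Longrightarrow> \<exists>\<tau>\<in>maximal_cones (normal_fan P). \<sigma> \<subseteq> \<tau>"
  shows "\<exists>i\<le>CARD('n). \<forall>\<rho>\<in>L i. rv \<rho> \<bullet> v \<noteq> mP P (rv \<rho>)"
proof -
  have "normal_cone P {v} \<in> normal_fan P" using v unfolding normal_fan_def by blast
  then obtain \<tau> where \<tau>: "\<tau> \<in> maximal_cones (normal_fan P)" "normal_cone P {v} \<subseteq> \<tau>"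
    using exm by blast
  have "\<not> (\<forall>i\<in>{..CARD('n)}. \<exists>\<rho>\<in>L i. \<rho> \<subseteq> \<tau>)"
    using sc \<tau>(1) unfolding simplicial_coloring_def by blast
  then obtain i where i: "i \<le> CARD('n)" "\<not> (\<exists>\<rho>\<in>L i. \<rho> \<subseteq> \<tau>)"
    by auto
  have Li: "L i \<subseteq> fan_rays (normal_fan P)"
    using sc i(1) unfolding simplicial_coloring_def coloring_def by auto
  have vP: "v \<in> P" using v face_of_imp_subset by blast
  have "\<forall>\<rho>\<in>L i. rv \<rho> \<bullet> v \<noteq> mP P (rv \<rho>)"
  proof (intro ballI notI)
    fix \<rho> assume r: "\<rho> \<in> L i" and eq: "rv \<rho> \<bullet> v = mP P (rv \<rho>)"
    have rr: "\<rho> \<in> normal_fan P" "aff_dim \<rho> = 1" using Li r unfolding fan_rays_def by auto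
    have "\<And>z. z \<in> P \<Longrightarrow> rv \<rho> \<bullet> v \<le> rv \<rho> \<bullet> z"
      using eq mP_le[OF fp_basic(1)[OF full]] by simp
    then have rn: "rv \<rho> \<in> normal_cone P {v}"
      unfolding normal_cone_def by simp
    have "\<rho> \<subseteq> normal_cone P {v}"
    proof
      fix x assume "x \<in> \<rho>"
      then obtain t where "x = t *\<^sub>R rv \<rho>" "0 \<le> t" using ray_of_fan(3)[OF full rr] by blast
      then show "x \<in> normal_cone P {v}" using normal_cone_cone[OF rn] by simp
    qed
    then have "\<rho> \<subseteq> \<tau>" using \<tau>(2) by blast
    then show False using i r by blast
  qed
  then show ?thesis using i by blast
qed

lemma key:
  fixes P1 P2 :: "(real^'n) set"
  assumes full1: "full_polytope P1" and full2: "full_polytope P2"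
    and ref: "fan_refines (normal_fan P2) (normal_fan P1)"
  shows "\<exists>v1 v2 A lam. {v1} face_of P1 \<and> {v2} face_of P2 \<and> finite A \<and>
     A \<subseteq> rv ` fan_rays (normal_fan P2) \<and> (\<forall>y\<in>A. 0 \<le> lam y) \<and> w = (\<Sum>y\<in>A. lam y *\<^sub>R y) \<and>
     (\<forall>y\<in>A. y \<bullet> v1 = mP P1 y \<and> y \<bullet> v2 = mP P2 y)"
proof -
  let ?R = "fan_rays (normal_fan P2)"
  let ?V = "rv ` ?R"
  have finR: "finite ?R" using finite_fan[OF full2] by (simp add: fan_rays_def)
  then have finV: "finite ?V" by simp
  have c2: "compact P2" "convex P2" "P2 \<noteq> {}" using fp_basic[OF full2] by auto
  define F where "F = P2 \<inter> {x. w \<bullet> x = mP P2 w}"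
  have Fface: "F face_of P2" unfolding F_def
    using face_of_Int_supporting_hyperplane_ge[OF c2(2), where a=w and b="mP P2 w"] mP_le[OF c2(1)] by blast
  have "F \<noteq> {}" using mP_attained[OF c2(1,3), of w] unfolding F_def by blast
  moreover have "compact F" "convex F"
    using face_of_imp_compact[OF c2(2,1) Fface] face_of_imp_convex[OF Fface] by auto
  ultimately obtain v2 where v2e: "v2 extreme_point_of F" using extreme_point_exists_convex by blast
  then have v2face: "{v2} face_of P2" using face_of_trans[OF _ Fface] face_of_singleton by blast
  have v2F: "v2 \<in> F" using v2e by (simp add: extreme_point_of_def)
  then have wv2: "w \<bullet> v2 = mP P2 w" and v2P: "v2 \<in> P2" by (auto simp: F_def)
  define A where "A = {y\<in>?V. y \<bullet> v2 = mP P2 y}"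
  have finA: "finite A" using finV by (simp add: A_def)
  define C where "C = conic hull (convex hull (insert 0 A))"
  have wC: "w \<in> C"
  proof (rule ccontr)
    assume nw: "w \<notin> C"
    have pol: "polytope (convex hull (insert 0 A))" using finA unfolding polytope_def by blast
    have "closed C" unfolding C_def using closed_conic_hull_strong[of "convex hull (insert 0 A)"] pol by blast
    moreover have "convex C" unfolding C_def by (simp add: convex_conic_hull)
    ultimately obtain d \<beta> where d: "d \<bullet> w < \<beta>" "\<forall>x\<in>C. \<beta> < d \<bullet> x"
      using separating_hyperplane_closed_point nw by blast
    have "0 \<in> C" unfolding C_def by (simp add: hull_inc)
    then have "\<beta> < d \<bullet> 0" using d(2) by blast
    then have b0: "\<beta> < 0" by simp
    have dA: "0 \<le> d \<bullet> y" if y: "y \<in> A" for y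
    proof (rule ccontr)
      assume "\<not> 0 \<le> d \<bullet> y"
      then have neg: "d \<bullet> y < 0" by simp
      define s where "s = \<beta> / (d \<bullet> y)"
      have s0: "0 \<le> s" using b0 neg by (simp add: s_def divide_nonpos_neg)
      have "y \<in> convex hull (insert 0 A)" using y by (simp add: hull_inc)
      then have "y \<in> C" unfolding C_def by (rule hull_inc)
      then have "s *\<^sub>R y \<in> C" unfolding C_def using conic_mul[OF conic_conic_hull _ s0] by blast
      then have "\<beta> < d \<bullet> (s *\<^sub>R y)" using d(2) by blast
      moreover have "d \<bullet> (s *\<^sub>R y) = \<beta>" using neg by (simp add: s_def)
      ultimately show False by simp
    qed
    define Op where "Op = (\<Inter>y\<in>?V - A. {z. mP P2 y < y \<bullet> z})"
    have "open Op" unfolding Op_def using finV by (intro open_INT) (auto simp: open_halfspace_gt)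
    moreover have "v2 \<in> Op"
    proof -
      have "\<And>y. y \<in> ?V - A \<Longrightarrow> mP P2 y < y \<bullet> v2"
      proof -
        fix y assume y: "y \<in> ?V - A"
        then have "y \<bullet> v2 \<noteq> mP P2 y" by (simp add: A_def)
        moreover have "mP P2 y \<le> y \<bullet> v2" using mP_le[OF c2(1) v2P] .
        ultimately show "mP P2 y < y \<bullet> v2" by simp
      qed
      then show ?thesis unfolding Op_def by blast
    qed
    ultimately obtain r where r: "r > 0" "ball v2 r \<subseteq> Op" using open_contains_ball by blast
    define \<epsilon> where "\<epsilon> = r / (2 * (norm d + 1))"
    have "0 < 2 * (norm d + 1)" using norm_ge_zero[of d] by (smt (verit))
    then have e0: "\<epsilon> > 0" using r unfolding \<epsilon>_def by (simp only: divide_pos_pos)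
    define z where "z = v2 + \<epsilon> *\<^sub>R d"
    have "norm (\<epsilon> *\<^sub>R d) < r"
    proof -
      have "norm (\<epsilon> *\<^sub>R d) = \<epsilon> * norm d" using e0 by simp
      also have "\<dots> \<le> \<epsilon> * (norm d + 1)" using e0 by simp
      also have "\<dots> = r / 2"
      proof -
        have "2 + norm d * 2 \<noteq> 0" "norm d + 1 \<noteq> 0" using norm_ge_zero[of d] by (smt (verit))+
        then show ?thesis by (simp add: \<epsilon>_def field_simps)
      qed
      finally show ?thesis using r by simp
    qed
    then have "z \<in> ball v2 r" by (simp add: z_def dist_norm)
    then have zO: "z \<in> Op" using r by blast
    have "z \<in> P2"
    proof -
      have "\<forall>\<rho>\<in>?R. mP P2 (rv \<rho>) \<le> rv \<rho> \<bullet> z"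
      proof
        fix \<rho> assume \<rho>: "\<rho> \<in> ?R"
        show "mP P2 (rv \<rho>) \<le> rv \<rho> \<bullet> z"
        proof (cases "rv \<rho> \<in> A")
          case True
          have "rv \<rho> \<bullet> v2 = mP P2 (rv \<rho>)" using True unfolding A_def by simp
          moreover have "0 \<le> d \<bullet> rv \<rho>" using dA[OF True] .
          ultimately show ?thesis using e0 by (simp add: z_def inner_add_right inner_commute)
        next
          case False
          then have "rv \<rho> \<in> ?V - A" using \<rho> by blast
          have "\<forall>y\<in>?V - A. mP P2 y < y \<bullet> z" using zO unfolding Op_def by simp
          then show ?thesis using \<open>rv \<rho> \<in> ?V - A\<close> by (meson less_imp_le)
        qed
      qed
      then have "z \<in> {x. \<forall>\<rho>\<in>?R. mP P2 (rv \<rho>) \<le> rv \<rho> \<bullet> x}" by simp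
      moreover have "{x. \<forall>\<rho>\<in>?R. mP P2 (rv \<rho>) \<le> rv \<rho> \<bullet> x} \<subseteq> P2" using Hrep[OF full2] by (rule equalityD2)
      ultimately show ?thesis by (rule subsetD[rotated])
    qed
    then have "mP P2 w \<le> w \<bullet> z" using mP_le[OF c2(1)] by blast
    moreover have "w \<bullet> z = w \<bullet> v2 + \<epsilon> * (d \<bullet> w)" by (simp add: z_def inner_add_right inner_commute)
    moreover have "\<epsilon> * (d \<bullet> w) < 0" using e0 d b0 by (simp add: mult_pos_neg)
    ultimately show False using wv2 by simp
  qed
  then obtain c x where cx: "w = c *\<^sub>R x" "0 \<le> c" "x \<in> convex hull (insert 0 A)"
    unfolding C_def conic_hull_explicit by blast
  then obtain u where u: "\<forall>z\<in>insert 0 A. 0 \<le> u z" "(\<Sum>z\<in>insert 0 A. u z *\<^sub>R z) = x"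
    using convex_hull_finite[of "insert 0 A"] finA by auto
  have "(\<Sum>z\<in>insert 0 A. u z *\<^sub>R z) = (\<Sum>z\<in>A. u z *\<^sub>R z)"
    by (cases "0 \<in> A") (simp_all add: insert_absorb finA)
  then have wsum: "w = (\<Sum>y\<in>A. (c * u y) *\<^sub>R y)"
    using cx u by (simp add: scaleR_sum_right)
  have lam0: "\<forall>y\<in>A. 0 \<le> c * u y" using u cx by simp
  have "normal_cone P2 {v2} \<in> normal_fan P2" using v2face unfolding normal_fan_def by blast
  then obtain \<sigma> where "\<sigma> \<in> normal_fan P1" "normal_cone P2 {v2} \<subseteq> \<sigma>"
    using ref by (auto simp: fan_refines_def)
  then obtain G where G: "G face_of P1" "G \<noteq> {}" "normal_cone P2 {v2} \<subseteq> normal_cone P1 G"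
    unfolding normal_fan_def by blast
  have c1: "compact P1" "convex P1" using fp_basic[OF full1] by auto
  have "compact G" "convex G" using face_of_imp_compact[OF c1(2,1) G(1)] face_of_imp_convex[OF G(1)] by auto
  then obtain v1 where v1e: "v1 extreme_point_of G" using extreme_point_exists_convex G(2) by blast
  then have v1face: "{v1} face_of P1" using face_of_trans[OF _ G(1)] face_of_singleton by blast
  have v1G: "v1 \<in> G" using v1e by (simp add: extreme_point_of_def)
  have v1P: "v1 \<in> P1" using v1G G(1) face_of_imp_subset by blast
  have tight: "\<forall>y\<in>A. y \<bullet> v1 = mP P1 y \<and> y \<bullet> v2 = mP P2 y"
  proof
    fix y assume y: "y \<in> A"
    then have yv2: "y \<bullet> v2 = mP P2 y" by (simp add: A_def)
    then have "y \<in> normal_cone P2 {v2}" unfolding normal_cone_def using mP_le[OF c2(1)] by auto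
    then have "y \<in> normal_cone P1 G" using G by blast
    then have "\<And>z. z \<in> P1 \<Longrightarrow> y \<bullet> v1 \<le> y \<bullet> z" using v1G unfolding normal_cone_def by blast
    then have "mP P1 y = y \<bullet> v1" using mP_eqI v1P by blast
    then show "y \<bullet> v1 = mP P1 y \<and> y \<bullet> v2 = mP P2 y" using yv2 by simp
  qed
  have Asub: "A \<subseteq> ?V" by (auto simp: A_def)
  show ?thesis
    apply (rule exI[of _ v1], rule exI[of _ v2], rule exI[of _ A], rule exI[of _ "\<lambda>y. c * u y"])
    using Asub v1face v2face finA lam0 wsum tight by simp
qed

lemma tight:
  fixes P1 P2 :: "(real^'n) set"
  assumes full1: "full_polytope P1" and full2: "full_polytope P2"
    and ref: "fan_refines (normal_fan P2) (normal_fan P1)"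
    and t: "0 \<le> t" "t \<le> 1"
    and x: "\<forall>y\<in>rv ` fan_rays (normal_fan P2). (1-t) * mP P1 y + t * mP P2 y \<le> y \<bullet> x"
  shows "\<exists>v1 v2. {v1} face_of P1 \<and> {v2} face_of P2 \<and>
     (\<forall>y\<in>rv ` fan_rays (normal_fan P2). y \<bullet> x = (1-t) * mP P1 y + t * mP P2 y \<longrightarrow>
        (t < 1 \<longrightarrow> y \<bullet> v1 = mP P1 y) \<and> (0 < t \<longrightarrow> y \<bullet> v2 = mP P2 y))"
proof -
  let ?V = "rv ` fan_rays (normal_fan P2)"
  have finV: "finite ?V" using finite_fan[OF full2] by (simp add: fan_rays_def)
  define \<beta> where "\<beta> y = (1-t) * mP P1 y + t * mP P2 y" for y
  define T where "T = {y\<in>?V. y \<bullet> x = \<beta> y}"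
  have finT: "finite T" using finV by (simp add: T_def)
  have TV: "T \<subseteq> ?V" by (auto simp: T_def)
  define w where "w = (\<Sum>y\<in>T. y)"
  obtain v1 v2 A lam where v1: "{v1} face_of P1" and v2: "{v2} face_of P2" and finA: "finite A"
    and AV: "A \<subseteq> ?V" and lam: "\<forall>y\<in>A. 0 \<le> lam y" and wA: "w = (\<Sum>y\<in>A. lam y *\<^sub>R y)"
    and tA: "\<forall>y\<in>A. y \<bullet> v1 = mP P1 y \<and> y \<bullet> v2 = mP P2 y"
    using key[OF full1 full2 ref, of w] by blast
  have v1P: "v1 \<in> P1" using v1 face_of_imp_subset by blast
  have v2P: "v2 \<in> P2" using v2 face_of_imp_subset by blast
  have cp1: "compact P1" using fp_basic(1)[OF full1] .
  have cp2: "compact P2" using fp_basic(1)[OF full2] .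
  define z where "z = (1-t) *\<^sub>R v1 + t *\<^sub>R v2"
  have yz: "y \<bullet> z = (1-t) * (y \<bullet> v1) + t * (y \<bullet> v2)" for y
    by (simp add: z_def inner_add_right)
  have zge: "\<beta> y \<le> y \<bullet> z" for y
  proof -
    have "(1-t) * mP P1 y \<le> (1-t) * (y \<bullet> v1)" using mP_le[OF cp1 v1P] t by (intro mult_left_mono) auto
    moreover have "t * mP P2 y \<le> t * (y \<bullet> v2)" using mP_le[OF cp2 v2P] t by (intro mult_left_mono) auto
    ultimately show ?thesis by (simp add: \<beta>_def yz)
  qed
  have Aeq: "\<beta> y = y \<bullet> z" if "y \<in> A" for y using tA that by (simp add: \<beta>_def yz)
  have "w \<bullet> x = (\<Sum>y\<in>A. lam y * (y \<bullet> x))" by (simp add: wA inner_sum_left)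
  also have "\<dots> \<ge> (\<Sum>y\<in>A. lam y * \<beta> y)"
  proof (rule sum_mono)
    fix y assume y: "y \<in> A"
    then have "\<beta> y \<le> y \<bullet> x" using x AV by (auto simp: \<beta>_def)
    then show "lam y * \<beta> y \<le> lam y * (y \<bullet> x)" using lam y by (simp add: mult_left_mono)
  qed
  also have "(\<Sum>y\<in>A. lam y * \<beta> y) = w \<bullet> z"
    by (simp add: wA inner_sum_left Aeq)
  finally have wxz: "w \<bullet> z \<le> w \<bullet> x" .
  have "w \<bullet> x = (\<Sum>y\<in>T. y \<bullet> x)" unfolding w_def by (rule inner_sum_left)
  also have "\<dots> = (\<Sum>y\<in>T. \<beta> y)"
  proof (rule sum.cong)
    fix y assume "y \<in> T" then show "y \<bullet> x = \<beta> y" unfolding T_def by blast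
  qed simp
  finally have wx: "w \<bullet> x = (\<Sum>y\<in>T. \<beta> y)" .
  have wz: "w \<bullet> z = (\<Sum>y\<in>T. y \<bullet> z)" unfolding w_def by (rule inner_sum_left)
  have "(\<Sum>y\<in>T. y \<bullet> z - \<beta> y) = (\<Sum>y\<in>T. y \<bullet> z) - (\<Sum>y\<in>T. \<beta> y)" by (rule sum_subtractf)
  also have "\<dots> = w \<bullet> z - w \<bullet> x" by (simp only: wz wx)
  finally have le0: "(\<Sum>y\<in>T. y \<bullet> z - \<beta> y) \<le> 0" using wxz by linarith
  have nn: "0 \<le> y \<bullet> z - \<beta> y" for y using zge[of y] by linarith
  have "0 \<le> (\<Sum>y\<in>T. y \<bullet> z - \<beta> y)" by (rule sum_nonneg) (rule nn)
  then have s0: "(\<Sum>y\<in>T. y \<bullet> z - \<beta> y) = 0" using le0 by linarith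
  have zero: "\<forall>y\<in>T. y \<bullet> z - \<beta> y = 0"
    by (rule sum_nonneg_eq_0_iff[OF finT, THEN iffD1]) (rule nn, rule s0)
  have concl: "(t < 1 \<longrightarrow> y \<bullet> v1 = mP P1 y) \<and> (0 < t \<longrightarrow> y \<bullet> v2 = mP P2 y)" if y: "y \<in> T" for y
  proof -
    have a: "0 \<le> (1-t) * (y \<bullet> v1 - mP P1 y)" using mP_le[OF cp1 v1P, of y] t by simp
    have b: "0 \<le> t * (y \<bullet> v2 - mP P2 y)" using mP_le[OF cp2 v2P, of y] t by simp
    have "(1-t) * (y \<bullet> v1 - mP P1 y) + t * (y \<bullet> v2 - mP P2 y) = y \<bullet> z - \<beta> y"
      by (simp add: yz \<beta>_def algebra_simps)
    then have s0: "(1-t) * (y \<bullet> v1 - mP P1 y) + t * (y \<bullet> v2 - mP P2 y) = 0" using zero y by simp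
    then have "(1-t) * (y \<bullet> v1 - mP P1 y) = 0" "t * (y \<bullet> v2 - mP P2 y) = 0" using a b by linarith+
    then show ?thesis by auto
  qed
  show ?thesis
    apply (rule exI[of _ v1], rule exI[of _ v2])
    using v1 v2 concl by (simp add: T_def \<beta>_def)
qed

lemma continuous_map_scaleR_const:
  fixes a :: "'b::real_normed_vector"
  shows "continuous_map X euclideanreal f \<Longrightarrow> continuous_map X euclidean (\<lambda>x. f x *\<^sub>R a)"
  by (simp add: continuous_map_atin tendsto_scaleR)

lemma continuous_map_vec:
  fixes g :: "'a \<Rightarrow> real^'n"
  assumes "\<And>j. continuous_map X euclideanreal (\<lambda>x. g x $ j)"
  shows "continuous_map X euclidean g"
proof -
  have eq: "g x = (\<Sum>j\<in>UNIV. (g x $ j) *\<^sub>R axis j 1)" for x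
    by (simp add: vec_eq_iff axis_def if_distrib cong: if_cong)
  have "continuous_map X euclidean (\<lambda>x. \<Sum>j\<in>UNIV. (g x $ j) *\<^sub>R (axis j 1 :: real^'n))"
    by (intro continuous_map_sum continuous_map_scaleR_const assms) simp
  then show ?thesis by (subst (asm) eq[symmetric]) simp
qed

lemma continuous_map_Max:
  assumes "finite V" "V \<noteq> {}" "\<And>v. v \<in> V \<Longrightarrow> continuous_map X euclideanreal (g v)"
  shows "continuous_map X euclideanreal (\<lambda>x. Max ((\<lambda>v. g v x) ` V))"
  using assms
proof (induction V rule: finite_ne_induct)
  case (singleton a)
  then show ?case by simp
next
  case (insert a F)
  have "(\<lambda>x. Max ((\<lambda>v. g v x) ` insert a F)) = (\<lambda>x. max (g a x) (Max ((\<lambda>v. g v x) ` F)))"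
    using insert by (simp add: Max_insert)
  moreover have "continuous_map X euclideanreal (\<lambda>x. max (g a x) (Max ((\<lambda>v. g v x) ` F)))"
    using insert by (intro continuous_map_real_max) auto
  ultimately show ?case by simp
qed

lemma ce_bij: "bij_betw (coord_enum :: nat \<Rightarrow> 'n::finite) {..<CARD('n)} UNIV"
proof -
  have "\<exists>e. bij_betw e {..<CARD('n)} (UNIV :: 'n set)"
    using ex_bij_betw_nat_finite[of "UNIV :: 'n set"] by (simp add: atLeast0LessThan)
  then show ?thesis unfolding coord_enum_def by (rule someI_ex)
qed

lemma sum_ce: "(\<Sum>j\<in>UNIV. g j) = (\<Sum>i<CARD('n). g (coord_enum i :: 'n::finite))"
proof -
  have b: "bij_betw (coord_enum :: nat \<Rightarrow> 'n) {..<CARD('n)} UNIV" by (rule ce_bij)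
  have im: "(coord_enum :: nat \<Rightarrow> 'n) ` {..<CARD('n)} = UNIV" and inj: "inj_on (coord_enum :: nat \<Rightarrow> 'n) {..<CARD('n)}"
    using b by (auto simp: bij_betw_def)
  have "(\<Sum>i<CARD('n). g (coord_enum i :: 'n)) = sum g ((coord_enum :: nat \<Rightarrow> 'n) ` {..<CARD('n)})"
    using sum.reindex[OF inj, of g] by (simp add: comp_def)
  then show ?thesis using im by simp
qed

definition U :: "(nat \<Rightarrow> real) \<Rightarrow> real^'n" where
  "U u = (\<chi> j. u (inv_into {..<CARD('n)} coord_enum j))"

lemma U_ce: "i < CARD('n) \<Longrightarrow> (U u :: real^'n) $ coord_enum i = u i"
  using ce_bij[where 'n='n] by (simp add: U_def bij_betw_def inv_into_f_f)

lemma inner_U: "(v :: real^'n) \<bullet> U u = (\<Sum>i<CARD('n). v $ coord_enum i * u i)"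
proof -
  have "v \<bullet> U u = (\<Sum>j\<in>UNIV. v $ j * U u $ j)" by (simp add: inner_vec_def)
  also have "\<dots> = (\<Sum>i<CARD('n). v $ coord_enum i * (U u :: real^'n) $ coord_enum i)"
    by (rule sum_ce[of "\<lambda>j. v $ j * U u $ j"])
  also have "\<dots> = (\<Sum>i<CARD('n). v $ coord_enum i * u i)" by (simp add: U_ce)
  finally show ?thesis .
qed

lemma CARD_ge1: "1 \<le> CARD('n::finite)"
  by (simp add: Suc_leI)

lemma nsphere_top: "topspace (nsphere p) = {x. (\<Sum>i\<le>p. x i ^ 2) = 1 \<and> (\<forall>i>p. x i = 0)}"
  by (simp add: nsphere)

lemma norm_U:
  assumes "u \<in> topspace (nsphere (CARD('n) - 1))"
  shows "norm (U u :: real^'n) = 1"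
proof -
  have "Suc (CARD('n) - 1) = CARD('n)" using CARD_ge1[where 'n='n] by simp
  then have "{..CARD('n) - 1} = {..<CARD('n)}" by (metis lessThan_Suc_atMost)
  then have s: "(\<Sum>i<CARD('n). u i ^ 2) = 1" using assms by (simp add: nsphere_top)
  have "(U u :: real^'n) \<bullet> U u = (\<Sum>i<CARD('n). u i ^ 2)"
    by (simp add: inner_U U_ce power2_eq_square)
  then have "norm (U u :: real^'n) ^ 2 = 1" using s by (simp add: power2_norm_eq_inner)
  then show ?thesis using norm_ge_zero[of "U u :: real^'n"] by (simp add: power2_eq_1_iff)
qed

lemma cont_inner_U: "continuous_map (nsphere p) euclideanreal (\<lambda>u. (v :: real^'n) \<bullet> U u)"
  unfolding inner_U
  by (intro continuous_map_sum continuous_map_real_mult continuous_map_nsphere_projection) auto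

lemma cont_U_comp: "continuous_map (nsphere p) euclideanreal (\<lambda>u. (U u :: real^'n) $ j)"
proof -
  obtain i where "i < CARD('n)" "coord_enum i = j"
    using ce_bij[where 'n='n] unfolding bij_betw_def by (metis UNIV_I imageE lessThan_iff)
  then have "(\<lambda>u. (U u :: real^'n) $ j) = (\<lambda>u. u i)" using U_ce by metis
  then show ?thesis using continuous_map_nsphere_projection by simp
qed

lemma Lpos:
  fixes z :: "nat \<Rightarrow> real"
  assumes s: "(\<Sum>i\<le>n0. z i) = 1" and i0: "i0 \<le> n0" "z i0 = 0"
  shows "0 < (\<Sum>i<n0. (z (Suc i) - 1 / real (Suc n0))\<^sup>2)"
proof (rule ccontr)
  assume "\<not> ?thesis"
  then have "(\<Sum>i<n0. (z (Suc i) - 1 / real (Suc n0))\<^sup>2) = 0"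
    using sum_nonneg[of "{..<n0}" "\<lambda>i. (z (Suc i) - 1 / real (Suc n0))\<^sup>2"] by simp
  then have all: "\<forall>i\<in>{..<n0}. (z (Suc i) - 1 / real (Suc n0))\<^sup>2 = 0"
    by (rule sum_nonneg_eq_0_iff[THEN iffD1, rotated 2]) auto
  then have zs: "z (Suc i) = 1 / real (Suc n0)" if "i < n0" for i using that by simp
  have "(\<Sum>i\<le>n0. z i) = z 0 + (\<Sum>i<n0. z (Suc i))"
    unfolding lessThan_Suc_atMost[symmetric] by (rule sum.lessThan_Suc_shift)
  also have "(\<Sum>i<n0. z (Suc i)) = real n0 / real (Suc n0)" using zs by simp
  finally have "z 0 = 1 - real n0 / real (Suc n0)" using s by simp
  also have "\<dots> = 1 / real (Suc n0)" by (simp add: field_simps)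
  finally have z0: "z 0 = 1 / real (Suc n0)" .
  show False
  proof (cases i0)
    case 0 then show False using z0 i0 by simp
  next
    case (Suc k) then show False using zs[of k] i0 by simp
  qed
qed

lemma chart_cont:
  assumes n0: "1 \<le> n0"
    and c: "\<And>i. continuous_map X euclideanreal (\<lambda>x. z x i)"
    and s: "\<And>x. x \<in> topspace X \<Longrightarrow> (\<Sum>i\<le>n0. z x i) = 1"
    and zz: "\<And>x. x \<in> topspace X \<Longrightarrow> \<exists>i\<le>n0. z x i = 0"
  shows "continuous_map X (nsphere (n0 - 1)) (\<lambda>x. simplex_chart n0 (z x))"
proof -
  define L where "L x = sqrt (\<Sum>i<n0. (z x (Suc i) - 1 / real (Suc n0))\<^sup>2)" for x
  have Lp: "0 < L x" if "x \<in> topspace X" for x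
    using Lpos[OF s[OF that]] zz[OF that] by (auto simp: L_def)
  have ch: "simplex_chart n0 (z x) = (\<lambda>i. if i < n0 then (z x (Suc i) - 1 / real (Suc n0)) / L x else 0)" for x
    by (simp only: simplex_chart_def L_def Let_def)
  have cL: "continuous_map X euclideanreal L"
    unfolding L_def by (intro continuous_map_sqrt continuous_map_sum continuous_map_real_pow continuous_map_diff c) auto
  have cont: "continuous_map X (powertop_real UNIV) (\<lambda>x. simplex_chart n0 (z x))"
    unfolding continuous_map_componentwise_UNIV ch
  proof
    fix k
    show "continuous_map X euclideanreal (\<lambda>x. if k < n0 then (z x (Suc k) - 1 / real (Suc n0)) / L x else 0)"
    proof (cases "k < n0")
      case True
      have "continuous_map X euclideanreal (\<lambda>x. (z x (Suc k) - 1 / real (Suc n0)) / L x)"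
        using Lp by (intro continuous_map_real_divide continuous_map_diff c cL continuous_map_canonical_const) (metis less_irrefl)
      then show ?thesis using True by simp
    next
      case False then show ?thesis by simp
    qed
  qed
  have img: "simplex_chart n0 (z x) \<in> {y. (\<Sum>i\<le>n0 - 1. y i ^ 2) = 1 \<and> (\<forall>i>n0 - 1. y i = 0)}"
    if x: "x \<in> topspace X" for x
  proof -
    have e: "{..n0 - 1} = {..<n0}" using n0 by auto
    have L2: "(L x)\<^sup>2 = (\<Sum>i<n0. (z x (Suc i) - 1 / real (Suc n0))\<^sup>2)"
      unfolding L_def by (simp add: sum_nonneg)
    have "(\<Sum>i<n0. ((z x (Suc i) - 1 / real (Suc n0)) / L x)\<^sup>2)
        = (\<Sum>i<n0. (z x (Suc i) - 1 / real (Suc n0))\<^sup>2) / (L x)\<^sup>2"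
      by (simp add: power_divide sum_divide_distrib)
    also have "\<dots> = 1" using L2 Lp[OF x] by (metis div_self less_irrefl zero_less_power)
    finally show ?thesis unfolding ch e by auto
  qed
  show ?thesis unfolding nsphere
    using cont img by (auto intro!: continuous_map_into_subtopology)
qed

lemma hom_deg:
  assumes "continuous_map (prod_topology (subtopology euclideanreal {0..1}) (nsphere p)) (nsphere p) h"
    and "\<And>x. x \<in> topspace (nsphere p) \<Longrightarrow> h (0, x) = f x"
    and "\<And>x. x \<in> topspace (nsphere p) \<Longrightarrow> h (1, x) = g x"
  shows "Brouwer_degree2 p f = Brouwer_degree2 p g"
proof (rule Brouwer_degree2_homotopic)
  show "homotopic_with (\<lambda>x. True) (nsphere p) (nsphere p) f g"
    using assms by (subst homotopic_with) (auto intro!: exI[of _ h])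
qed

definition Mxk :: "(real^'n) set \<Rightarrow> (real^'n \<Rightarrow> real) \<Rightarrow> real^'n \<Rightarrow> real" where
  "Mxk V d y = Max ((\<lambda>v. - (v \<bullet> y) / d v) ` V)"

definition Xk :: "(real^'n) set \<Rightarrow> real^'n \<Rightarrow> (real^'n \<Rightarrow> real) \<Rightarrow> real^'n \<Rightarrow> real^'n" where
  "Xk V c d y = c + (1 / Mxk V d y) *\<^sub>R y"

definition eck :: "(nat \<Rightarrow> (real^'n) set set) \<Rightarrow> (real^'n \<Rightarrow> real) \<Rightarrow> real^'n \<Rightarrow> nat \<Rightarrow> real" where
  "eck L b x i = (\<Prod>\<rho>\<in>L i. rv \<rho> \<bullet> x - b (rv \<rho>))"

definition Evk :: "nat \<Rightarrow> (nat \<Rightarrow> (real^'n) set set) \<Rightarrow> (real^'n \<Rightarrow> real) \<Rightarrow> real^'n \<Rightarrow> nat \<Rightarrow> real" where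
  "Evk n L b x = (\<lambda>i. if i \<le> n then eck L b x i / (\<Sum>j\<le>n. eck L b x j) else 0)"

lemma cfst: "continuous_map (prod_topology (subtopology euclideanreal {0..1}) Y) euclideanreal fst"
  using continuous_map_fst continuous_map_in_subtopology by blast

lemma csnd_inner: "continuous_map (prod_topology X (nsphere p)) euclideanreal (\<lambda>x. (v::real^'n) \<bullet> U (snd x))"
  using continuous_map_compose[OF continuous_map_snd cont_inner_U, of X p v] by (simp add: o_def)

lemma top_W: "topspace (prod_topology (subtopology euclideanreal {0..1}) (nsphere p)) = {0..1} \<times> topspace (nsphere p)"
  by (simp add: topspace_prod_topology)

abbreviation WW :: "nat \<Rightarrow> (real \<times> (nat \<Rightarrow> real)) topology" where
  "WW p \<equiv> prod_topology (subtopology euclideanreal {0..1}) (nsphere p)"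

locale fam =
  fixes V :: "(real^'n) set" and L :: "nat \<Rightarrow> (real^'n) set set"
    and c1 c2 :: "real^'n" and m1 m2 :: "real^'n \<Rightarrow> real"
  assumes finV: "finite V"
    and dpos: "\<And>t v. 0 \<le> t \<Longrightarrow> t \<le> 1 \<Longrightarrow> v \<in> V \<Longrightarrow> 0 < (1-t) * (v \<bullet> c1 - m1 v) + t * (v \<bullet> c2 - m2 v)"
    and negdir: "\<And>y. y \<noteq> 0 \<Longrightarrow> \<exists>v\<in>V. v \<bullet> y < 0"
    and finL: "\<And>i. i \<le> CARD('n) \<Longrightarrow> finite (L i)"
    and LV: "\<And>i \<rho>. i \<le> CARD('n) \<Longrightarrow> \<rho> \<in> L i \<Longrightarrow> rv \<rho> \<in> V"
    and covers: "\<And>v. v \<in> V \<Longrightarrow> \<exists>i\<le>CARD('n). \<exists>\<rho>\<in>L i. rv \<rho> = v"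
    and possum: "\<And>t x. 0 \<le> t \<Longrightarrow> t \<le> 1 \<Longrightarrow> (\<forall>v\<in>V. (1-t) * m1 v + t * m2 v \<le> v \<bullet> x) \<Longrightarrow>
        \<exists>i\<le>CARD('n). \<forall>\<rho>\<in>L i. (1-t) * m1 (rv \<rho>) + t * m2 (rv \<rho>) < rv \<rho> \<bullet> x"
begin

definition dd :: "real \<Rightarrow> real^'n \<Rightarrow> real" where
  "dd t = (\<lambda>v. (1-t) * (v \<bullet> c1 - m1 v) + t * (v \<bullet> c2 - m2 v))"
definition bt :: "real \<Rightarrow> real^'n \<Rightarrow> real" where
  "bt t = (\<lambda>v. (1-t) * m1 v + t * m2 v)"
definition ct :: "real \<Rightarrow> real^'n" where
  "ct t = (1-t) *\<^sub>R c1 + t *\<^sub>R c2"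
definition Xt :: "real \<Rightarrow> real^'n \<Rightarrow> real^'n" where
  "Xt t y = Xk V (ct t) (dd t) y"
definition Et :: "real \<Rightarrow> real^'n \<Rightarrow> nat \<Rightarrow> real" where
  "Et t y = Evk CARD('n) L (bt t) (Xt t y)"
definition Hm :: "real \<times> (nat \<Rightarrow> real) \<Rightarrow> nat \<Rightarrow> real" where
  "Hm x = simplex_chart CARD('n) (Et (fst x) (U (snd x)))"

lemma Vne: "V \<noteq> {}"
  using negdir[of "1"] by auto

lemma dd_pos: "0 \<le> t \<Longrightarrow> t \<le> 1 \<Longrightarrow> v \<in> V \<Longrightarrow> 0 < dd t v"
  using dpos by (simp add: dd_def)

lemma dd_eq: "v \<bullet> ct t - bt t v = dd t v"
  by (simp add: dd_def bt_def ct_def inner_add_right algebra_simps)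

lemma Mx_ge: "v \<in> V \<Longrightarrow> - (v \<bullet> y) / dd t v \<le> Mxk V (dd t) y"
  unfolding Mxk_def using finV by (intro Max_ge) auto

lemma Mx_pos:
  assumes t: "0 \<le> t" "t \<le> 1" and y: "y \<noteq> 0"
  shows "0 < Mxk V (dd t) y"
proof -
  obtain v where v: "v \<in> V" "v \<bullet> y < 0" using negdir[OF y] by blast
  have "v \<bullet> y / dd t v < 0" using v(2) dd_pos[OF t v(1)] by (rule divide_neg_pos)
  then have "0 < - (v \<bullet> y) / dd t v" by simp
  then show ?thesis using Mx_ge[OF v(1), of y t] by linarith
qed

lemma Mx_in: "\<exists>v\<in>V. Mxk V (dd t) y = - (v \<bullet> y) / dd t v"
proof -
  have "Mxk V (dd t) y \<in> (\<lambda>v. - (v \<bullet> y) / dd t v) ` V"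
    unfolding Mxk_def using finV Vne by (intro Max_in) auto
  then show ?thesis by auto
qed

lemma sl_eq: "v \<bullet> Xt t y - bt t v = dd t v + (v \<bullet> y) / Mxk V (dd t) y"
proof -
  have "v \<bullet> Xt t y = v \<bullet> ct t + (v \<bullet> y) / Mxk V (dd t) y"
    by (simp add: Xt_def Xk_def inner_add_right)
  then show ?thesis using dd_eq[of v t] by simp
qed

lemma X_in:
  assumes t: "0 \<le> t" "t \<le> 1" and y: "y \<noteq> 0" and v: "v \<in> V"
  shows "bt t v \<le> v \<bullet> Xt t y"
proof -
  let ?M = "Mxk V (dd t) y"
  have M: "0 < ?M" using Mx_pos[OF t y] .
  have d: "0 < dd t v" using dd_pos[OF t v] .
  have h: "- (v \<bullet> y) / dd t v \<le> ?M" using Mx_ge[OF v] .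
  then have "- (v \<bullet> y) \<le> ?M * dd t v" unfolding pos_divide_le_eq[OF d] .
  then have "- dd t v \<le> (v \<bullet> y) / ?M" using M by (simp add: le_divide_eq algebra_simps)
  then have "0 \<le> dd t v + (v \<bullet> y) / ?M" by simp
  then show ?thesis using sl_eq[of v t y] by simp
qed

lemma X_tight:
  assumes t: "0 \<le> t" "t \<le> 1" and y: "y \<noteq> 0"
  shows "\<exists>v\<in>V. v \<bullet> Xt t y = bt t v"
proof -
  obtain v where v: "v \<in> V" "Mxk V (dd t) y = - (v \<bullet> y) / dd t v" using Mx_in by blast
  have M: "0 < Mxk V (dd t) y" using Mx_pos[OF t y] .
  have d: "0 < dd t v" using dd_pos[OF t v(1)] .
  have "(v \<bullet> y) / Mxk V (dd t) y = - dd t v"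
    using v(2) M d by (simp add: field_simps)
  then have "v \<bullet> Xt t y - bt t v = 0" using sl_eq[of v t y] by simp
  then show ?thesis using v(1) by auto
qed

lemma ec_nonneg:
  assumes t: "0 \<le> t" "t \<le> 1" and y: "y \<noteq> 0" and i: "i \<le> CARD('n)"
  shows "0 \<le> eck L (bt t) (Xt t y) i"
  unfolding eck_def
proof (rule prod_nonneg)
  fix \<rho> assume "\<rho> \<in> L i"
  then have "rv \<rho> \<in> V" using LV i by blast
  then show "0 \<le> rv \<rho> \<bullet> Xt t y - bt t (rv \<rho>)" using X_in[OF t y] by simp
qed

lemma ec_zero:
  assumes t: "0 \<le> t" "t \<le> 1" and y: "y \<noteq> 0"
  shows "\<exists>i\<le>CARD('n). eck L (bt t) (Xt t y) i = 0"
proof -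
  obtain v where v: "v \<in> V" "v \<bullet> Xt t y = bt t v" using X_tight[OF t y] by blast
  obtain i \<rho> where i: "i \<le> CARD('n)" "\<rho> \<in> L i" "rv \<rho> = v" using covers[OF v(1)] by blast
  have "eck L (bt t) (Xt t y) i = 0"
    unfolding eck_def using finL[OF i(1)] i v by (intro prod_zero bexI[of _ \<rho>]) auto
  then show ?thesis using i(1) by blast
qed

lemma ec_sum_pos:
  assumes t: "0 \<le> t" "t \<le> 1" and y: "y \<noteq> 0"
  shows "0 < (\<Sum>j\<le>CARD('n). eck L (bt t) (Xt t y) j)"
proof -
  have "\<forall>v\<in>V. (1-t) * m1 v + t * m2 v \<le> v \<bullet> Xt t y"
    using X_in[OF t y] by (simp add: bt_def)
  then obtain i where i: "i \<le> CARD('n)" "\<forall>\<rho>\<in>L i. (1-t) * m1 (rv \<rho>) + t * m2 (rv \<rho>) < rv \<rho> \<bullet> Xt t y"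
    using possum[OF t] by blast
  have "0 < eck L (bt t) (Xt t y) i"
    unfolding eck_def
  proof (rule prod_pos)
    fix \<rho> assume "\<rho> \<in> L i"
    then show "0 < rv \<rho> \<bullet> Xt t y - bt t (rv \<rho>)" using i by (simp add: bt_def)
  qed
  moreover have "\<forall>j\<in>{..CARD('n)}. 0 \<le> eck L (bt t) (Xt t y) j" using ec_nonneg[OF t y] by simp
  ultimately show ?thesis using i(1) by (intro sum_pos2[of "{..CARD('n)}" i]) auto
qed

lemma Et_props:
  assumes t: "0 \<le> t" "t \<le> 1" and y: "y \<noteq> 0"
  shows "(\<Sum>i\<le>CARD('n). Et t y i) = 1" "\<exists>i\<le>CARD('n). Et t y i = 0"
proof -
  let ?S = "(\<Sum>j\<le>CARD('n). eck L (bt t) (Xt t y) j)"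
  have S: "0 < ?S" using ec_sum_pos[OF t y] .
  have "(\<Sum>i\<le>CARD('n). Et t y i) = (\<Sum>i\<le>CARD('n). eck L (bt t) (Xt t y) i / ?S)"
    by (simp add: Et_def Evk_def)
  also have "\<dots> = ?S / ?S" by (rule sum_divide_distrib[symmetric])
  also have "\<dots> = 1" using S by simp
  finally show "(\<Sum>i\<le>CARD('n). Et t y i) = 1" .
  obtain i where "i \<le> CARD('n)" "eck L (bt t) (Xt t y) i = 0" using ec_zero[OF t y] by blast
  then show "\<exists>i\<le>CARD('n). Et t y i = 0" by (auto simp: Et_def Evk_def)
qed



lemma topW: "x \<in> topspace (WW (CARD('n) - 1)) \<Longrightarrow> 0 \<le> fst x \<and> fst x \<le> 1 \<and> (U (snd x) :: real^'n) \<noteq> 0"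
proof -
  assume x: "x \<in> topspace (WW (CARD('n) - 1))"
  then have "fst x \<in> {0..1}" "snd x \<in> topspace (nsphere (CARD('n) - 1))" by (auto simp: top_W)
  then show ?thesis using norm_U[where 'n='n, of "snd x"] by auto
qed

lemma c_dd: "continuous_map (WW (CARD('n) - 1)) euclideanreal (\<lambda>x. dd (fst x) v)"
  unfolding dd_def by (intro continuous_map_add continuous_map_real_mult continuous_map_diff cfst continuous_map_canonical_const)

lemma c_Mx: "continuous_map (WW (CARD('n) - 1)) euclideanreal (\<lambda>x. Mxk V (dd (fst x)) (U (snd x)))"
  unfolding Mxk_def
proof (rule continuous_map_Max[OF finV Vne])
  fix v assume v: "v \<in> V"
  show "continuous_map (WW (CARD('n) - 1)) euclideanreal (\<lambda>x. - (v \<bullet> U (snd x)) / dd (fst x) v)"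
  proof (intro continuous_map_real_divide continuous_map_minus csnd_inner c_dd)
    fix x assume "x \<in> topspace (WW (CARD('n) - 1))"
    then have "0 \<le> fst x" "fst x \<le> 1" using topW by auto
    then show "dd (fst x) v \<noteq> 0" using dd_pos v by (metis less_irrefl)
  qed
qed

lemma Mx_top_pos: "x \<in> topspace (WW (CARD('n) - 1)) \<Longrightarrow> 0 < Mxk V (dd (fst x)) (U (snd x))"
  using topW Mx_pos by blast

lemma c_ec:
  assumes j: "j \<le> CARD('n)"
  shows "continuous_map (WW (CARD('n) - 1)) euclideanreal (\<lambda>x. eck L (bt (fst x)) (Xt (fst x) (U (snd x))) j)"
proof -
  have eq: "eck L (bt (fst x)) (Xt (fst x) (U (snd x))) j =
     (\<Prod>\<rho>\<in>L j. dd (fst x) (rv \<rho>) + (rv \<rho> \<bullet> U (snd x)) / Mxk V (dd (fst x)) (U (snd x)))" for x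
    unfolding eck_def by (simp add: sl_eq)
  have "continuous_map (WW (CARD('n) - 1)) euclideanreal (\<lambda>x. \<Prod>\<rho>\<in>L j. dd (fst x) (rv \<rho>) + (rv \<rho> \<bullet> U (snd x)) / Mxk V (dd (fst x)) (U (snd x)))"
  proof (intro continuous_map_prod finL[OF j] continuous_map_add continuous_map_real_divide c_dd csnd_inner c_Mx)
    fix x assume "x \<in> topspace (WW (CARD('n) - 1))"
    then show "Mxk V (dd (fst x)) (U (snd x)) \<noteq> 0" using Mx_top_pos by (metis less_irrefl)
  qed
  then show ?thesis by (simp only: eq)
qed

lemma c_Et: "continuous_map (WW (CARD('n) - 1)) euclideanreal (\<lambda>x. Et (fst x) (U (snd x)) i)"
proof (cases "i \<le> CARD('n)")
  case True
  have nz: "(\<Sum>j\<le>CARD('n). eck L (bt (fst x)) (Xt (fst x) (U (snd x))) j) \<noteq> 0"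
    if "x \<in> topspace (WW (CARD('n) - 1))" for x
  proof -
    have "0 \<le> fst x" "fst x \<le> 1" "(U (snd x) :: real^'n) \<noteq> 0" using topW that by auto
    then show ?thesis using ec_sum_pos by (metis less_irrefl)
  qed
  have "continuous_map (WW (CARD('n) - 1)) euclideanreal (\<lambda>x. eck L (bt (fst x)) (Xt (fst x) (U (snd x))) i /
      (\<Sum>j\<le>CARD('n). eck L (bt (fst x)) (Xt (fst x) (U (snd x))) j))"
    apply (intro continuous_map_real_divide continuous_map_sum c_ec)
    using True nz by auto
  then show ?thesis using True by (simp add: Et_def Evk_def)
next
  case False
  then show ?thesis by (simp add: Et_def Evk_def)
qed

lemma cont_Hm: "continuous_map (WW (CARD('n) - 1)) (nsphere (CARD('n) - 1)) Hm"
  unfolding Hm_def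
proof (rule chart_cont[OF CARD_ge1 c_Et])
  fix x assume "x \<in> topspace (WW (CARD('n) - 1))"
  then have "0 \<le> fst x" "fst x \<le> 1" "(U (snd x) :: real^'n) \<noteq> 0" using topW by auto
  then show "(\<Sum>i\<le>CARD('n). Et (fst x) (U (snd x)) i) = 1" "\<exists>i\<le>CARD('n). Et (fst x) (U (snd x)) i = 0"
    using Et_props by blast+
qed

lemma Et0: "Et 0 y = Evk CARD('n) L m1 (Xk V c1 (\<lambda>v. v \<bullet> c1 - m1 v) y)"
proof -
  have "bt 0 = m1" "ct 0 = c1" "dd 0 = (\<lambda>v. v \<bullet> c1 - m1 v)" by (auto simp: bt_def ct_def dd_def)
  then show ?thesis by (simp add: Et_def Xt_def)
qed

lemma Et1: "Et 1 y = Evk CARD('n) L m2 (Xk V c2 (\<lambda>v. v \<bullet> c2 - m2 v) y)"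
proof -
  have "bt 1 = m2" "ct 1 = c2" "dd 1 = (\<lambda>v. v \<bullet> c2 - m2 v)" by (auto simp: bt_def ct_def dd_def)
  then show ?thesis by (simp add: Et_def Xt_def)
qed

end

lemma exm_fan:
  fixes P :: "(real^'n) set"
  assumes "full_polytope P"
  shows "\<And>\<sigma>. \<sigma> \<in> normal_fan P \<Longrightarrow> \<exists>\<tau>\<in>maximal_cones (normal_fan P). \<sigma> \<subseteq> \<tau>"
  using exists_maximal[OF finite_fan[OF assms]] by blast

lemma possum_pair:
  fixes P1 P2 :: "(real^'n) set"
  assumes full1: "full_polytope P1" and full2: "full_polytope P2"
    and ref: "fan_refines (normal_fan P2) (normal_fan P1)"
    and rays: "fan_rays (normal_fan P1) = fan_rays (normal_fan P2)"
    and sc1: "simplicial_coloring (normal_fan P1) L" and sc2: "simplicial_coloring (normal_fan P2) L"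
    and t: "0 \<le> t" "t \<le> 1"
    and x: "\<forall>v\<in>rv ` fan_rays (normal_fan P2). (1-t) * mP P1 v + t * mP P2 v \<le> v \<bullet> x"
  shows "\<exists>i\<le>CARD('n). \<forall>\<rho>\<in>L i. (1-t) * mP P1 (rv \<rho>) + t * mP P2 (rv \<rho>) < rv \<rho> \<bullet> x"
proof -
  obtain v1 v2 where v1: "{v1} face_of P1" and v2: "{v2} face_of P2"
    and tt: "\<forall>y\<in>rv ` fan_rays (normal_fan P2). y \<bullet> x = (1-t) * mP P1 y + t * mP P2 y \<longrightarrow>
        (t < 1 \<longrightarrow> y \<bullet> v1 = mP P1 y) \<and> (0 < t \<longrightarrow> y \<bullet> v2 = mP P2 y)"
    using tight[OF full1 full2 ref t x] by blast
  have LR: "\<And>i \<rho>. i \<le> CARD('n) \<Longrightarrow> \<rho> \<in> L i \<Longrightarrow> rv \<rho> \<in> rv ` fan_rays (normal_fan P2)"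
    using sc2 unfolding simplicial_coloring_def coloring_def by blast
  show ?thesis
  proof (cases "t < 1")
    case True
    obtain i where i: "i \<le> CARD('n)" "\<forall>\<rho>\<in>L i. rv \<rho> \<bullet> v1 \<noteq> mP P1 (rv \<rho>)"
      using vertex_color[OF full1 v1 sc1 exm_fan[OF full1]] by blast
    have "\<forall>\<rho>\<in>L i. (1-t) * mP P1 (rv \<rho>) + t * mP P2 (rv \<rho>) < rv \<rho> \<bullet> x"
    proof
      fix \<rho> assume r: "\<rho> \<in> L i"
      have inV: "rv \<rho> \<in> rv ` fan_rays (normal_fan P2)" using LR[OF i(1) r] .
      have le: "(1-t) * mP P1 (rv \<rho>) + t * mP P2 (rv \<rho>) \<le> rv \<rho> \<bullet> x" using x inV by blast
      have "rv \<rho> \<bullet> x \<noteq> (1-t) * mP P1 (rv \<rho>) + t * mP P2 (rv \<rho>)"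
      proof
        assume "rv \<rho> \<bullet> x = (1-t) * mP P1 (rv \<rho>) + t * mP P2 (rv \<rho>)"
        then have "rv \<rho> \<bullet> v1 = mP P1 (rv \<rho>)" using tt inV True by blast
        then show False using i r by blast
      qed
      then show "(1-t) * mP P1 (rv \<rho>) + t * mP P2 (rv \<rho>) < rv \<rho> \<bullet> x" using le by linarith
    qed
    then show ?thesis using i(1) by blast
  next
    case False
    then have t0: "0 < t" by simp
    obtain i where i: "i \<le> CARD('n)" "\<forall>\<rho>\<in>L i. rv \<rho> \<bullet> v2 \<noteq> mP P2 (rv \<rho>)"
      using vertex_color[OF full2 v2 sc2 exm_fan[OF full2]] by blast
    have "\<forall>\<rho>\<in>L i. (1-t) * mP P1 (rv \<rho>) + t * mP P2 (rv \<rho>) < rv \<rho> \<bullet> x"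
    proof
      fix \<rho> assume r: "\<rho> \<in> L i"
      have inV: "rv \<rho> \<in> rv ` fan_rays (normal_fan P2)" using LR[OF i(1) r] .
      have le: "(1-t) * mP P1 (rv \<rho>) + t * mP P2 (rv \<rho>) \<le> rv \<rho> \<bullet> x" using x inV by blast
      have "rv \<rho> \<bullet> x \<noteq> (1-t) * mP P1 (rv \<rho>) + t * mP P2 (rv \<rho>)"
      proof
        assume "rv \<rho> \<bullet> x = (1-t) * mP P1 (rv \<rho>) + t * mP P2 (rv \<rho>)"
        then have "rv \<rho> \<bullet> v2 = mP P2 (rv \<rho>)" using tt inV t0 by blast
        then show False using i r by blast
      qed
      then show "(1-t) * mP P1 (rv \<rho>) + t * mP P2 (rv \<rho>) < rv \<rho> \<bullet> x" using le by linarith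
    qed
    then show ?thesis using i(1) by blast
  qed
qed

lemma fam_pair:
  fixes P1 P2 :: "(real^'n) set"
  assumes full1: "full_polytope P1" and full2: "full_polytope P2"
    and ref: "fan_refines (normal_fan P2) (normal_fan P1)"
    and rays: "fan_rays (normal_fan P1) = fan_rays (normal_fan P2)"
    and sc1: "simplicial_coloring (normal_fan P1) L" and sc2: "simplicial_coloring (normal_fan P2) L"
    and c1: "c1 \<in> interior P1" and c2: "c2 \<in> interior P2"
  shows "fam (rv ` fan_rays (normal_fan P2)) L c1 c2 (mP P1) (mP P2)"
proof
  let ?R = "fan_rays (normal_fan P2)"
  show "finite (rv ` ?R)" using finite_fan[OF full2] by (simp add: fan_rays_def)
  have rvnz: "\<And>\<rho>. \<rho> \<in> ?R \<Longrightarrow> rv \<rho> \<noteq> 0"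
    using ray_of_fan(2)[OF full2] unfolding fan_rays_def by blast
  show "0 < (1-t) * (v \<bullet> c1 - mP P1 v) + t * (v \<bullet> c2 - mP P2 v)"
    if t: "0 \<le> t" "t \<le> 1" and v: "v \<in> rv ` ?R" for t v
  proof -
    have vnz: "v \<noteq> 0" using v rvnz by auto
    have a: "0 < v \<bullet> c1 - mP P1 v" using interior_strict[OF full1 c1 vnz] by simp
    have b: "0 < v \<bullet> c2 - mP P2 v" using interior_strict[OF full2 c2 vnz] by simp
    show ?thesis
    proof (cases "t = 0")
      case True then show ?thesis using a by simp
    next
      case False
      then have "0 < t * (v \<bullet> c2 - mP P2 v)" using t b by simp
      moreover have "0 \<le> (1-t) * (v \<bullet> c1 - mP P1 v)" using t a by simp
      ultimately show ?thesis by linarith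
    qed
  qed
  show "\<exists>v\<in>rv ` ?R. v \<bullet> y < 0" if "y \<noteq> 0" for y
    using bounded_dir[OF full2 that] by blast
  have LR: "\<And>i. i \<le> CARD('n) \<Longrightarrow> L i \<subseteq> ?R"
    using sc2 unfolding simplicial_coloring_def coloring_def by blast
  show "finite (L i)" if "i \<le> CARD('n)" for i
    using LR[OF that] finite_fan[OF full2] finite_subset[of "L i" ?R] by (simp add: fan_rays_def)
  show "rv \<rho> \<in> rv ` ?R" if "i \<le> CARD('n)" "\<rho> \<in> L i" for i \<rho>
    using LR that by blast
  show "\<exists>i\<le>CARD('n). \<exists>\<rho>\<in>L i. rv \<rho> = v" if vv: "v \<in> rv ` ?R" for v
  proof -
    obtain \<rho> where "\<rho> \<in> ?R" "v = rv \<rho>" using vv by blast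
    moreover have "?R = (\<Union>i\<in>{..CARD('n)}. L i)"
      using sc2 unfolding simplicial_coloring_def coloring_def by simp
    ultimately show ?thesis by auto
  qed
  show "\<exists>i\<le>CARD('n). \<forall>\<rho>\<in>L i. (1-t) * mP P1 (rv \<rho>) + t * mP P2 (rv \<rho>) < rv \<rho> \<bullet> x"
    if "0 \<le> t" "t \<le> 1" "\<forall>v\<in>rv ` ?R. (1-t) * mP P1 v + t * mP P2 v \<le> v \<bullet> x" for t x
    using possum_pair[OF full1 full2 ref rays sc1 sc2 that] .
qed

lemma fan_refines_refl: "fan_refines S S"
  unfolding fan_refines_def by blast

lemma fam_single:
  fixes P :: "(real^'n) set"
  assumes full: "full_polytope P" and sc: "simplicial_coloring (normal_fan P) L" and c: "c \<in> interior P"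
  shows "fam (rv ` fan_rays (normal_fan P)) L c c (mP P) (mP P)"
  using fam_pair[OF full full fan_refines_refl refl sc sc c c] .


lemma ray_unique_aux:
  fixes P :: "(real^'n) set"
  assumes cv: "convex P" and c: "c \<in> interior P" and ab: "0 < a" "a < b" and y: "y \<noteq> 0"
    and b: "c + b *\<^sub>R y \<in> closure P"
  shows "c + a *\<^sub>R y \<in> interior P"
proof -
  have "open_segment c (c + b *\<^sub>R y) \<subseteq> interior P"
    using in_interior_closure_convex_segment[OF cv c b] .
  moreover have "c + a *\<^sub>R y \<in> open_segment c (c + b *\<^sub>R y)"
  proof -
    have "c \<noteq> c + b *\<^sub>R y" using ab y by simp
    moreover have "0 < a / b" "a / b < 1" using ab by auto
    moreover have "c + a *\<^sub>R y = (1 - a / b) *\<^sub>R c + (a / b) *\<^sub>R (c + b *\<^sub>R y)"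
      using ab by (simp add: algebra_simps)
    ultimately show ?thesis unfolding in_segment by blast
  qed
  ultimately show ?thesis by blast
qed

lemma ray_unique:
  fixes P :: "(real^'n) set"
  assumes cv: "convex P" and cl: "closed P" and c: "c \<in> interior P" and ab: "0 < a" "0 < b" and y: "y \<noteq> 0"
    and a: "c + a *\<^sub>R y \<in> frontier P" and b: "c + b *\<^sub>R y \<in> frontier P"
  shows "a = b"
proof (rule ccontr)
  assume "a \<noteq> b"
  then consider "a < b" | "b < a" by linarith
  then show False
  proof cases
    case 1
    then have "c + a *\<^sub>R y \<in> interior P" using ray_unique_aux[OF cv c ab(1) 1 y] b by (simp add: frontier_def)
    then show False using a by (simp add: frontier_def)
  next
    case 2
    then have "c + b *\<^sub>R y \<in> interior P" using ray_unique_aux[OF cv c ab(2) 2 y] a by (simp add: frontier_def)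
    then show False using b by (simp add: frontier_def)
  qed
qed

lemma chart_inv:
  fixes P :: "(real^'n) set"
  assumes full: "full_polytope P" and sc: "simplicial_coloring (normal_fan P) L"
    and c: "c = (SOME c. c \<in> interior P)"
    and u: "u \<in> topspace (nsphere (CARD('n) - 1))"
  shows "Xk (rv ` fan_rays (normal_fan P)) c (\<lambda>v. v \<bullet> c - mP P v) (U u) \<in> frontier P"
    "inv_into (frontier P) (polytope_chart P) u = Xk (rv ` fan_rays (normal_fan P)) c (\<lambda>v. v \<bullet> c - mP P v) (U u)"
proof -
  let ?R = "fan_rays (normal_fan P)"
  let ?V = "rv ` ?R"
  let ?d = "\<lambda>v. v \<bullet> c - mP P v"
  let ?y = "U u :: real^'n"
  let ?X = "Xk ?V c ?d ?y"
  have cin: "c \<in> interior P" unfolding c using fp_basic(5)[OF full] by (simp add: some_in_eq)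
  interpret F: fam ?V L c c "mP P" "mP P" using fam_single[OF full sc cin] .
  have y1: "norm ?y = 1" using norm_U[OF u] .
  then have y0: "?y \<noteq> 0" by auto
  have dd0: "F.dd 0 = ?d" by (simp add: F.dd_def)
  have Xeq: "F.Xt 0 ?y = ?X" by (simp add: F.Xt_def F.ct_def dd0)
  have bt0: "F.bt 0 = mP P" by (simp add: F.bt_def)
  have M: "0 < Mxk ?V ?d ?y" using F.Mx_pos[of 0 ?y] y0 dd0 by simp
  have Xin: "\<forall>v\<in>?V. mP P v \<le> v \<bullet> ?X" using F.X_in[of 0 ?y] y0 Xeq bt0 by simp
  obtain v0 where v0: "v0 \<in> ?V" "v0 \<bullet> ?X = mP P v0" using F.X_tight[of 0 ?y] y0 Xeq bt0 by auto
  have cl: "closed P" and cv: "convex P" using fp_basic[OF full] by auto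
  have XP: "?X \<in> P"
  proof -
    have "\<forall>\<rho>\<in>?R. mP P (rv \<rho>) \<le> rv \<rho> \<bullet> ?X" using Xin by blast
    then have "?X \<in> {x. \<forall>\<rho>\<in>?R. mP P (rv \<rho>) \<le> rv \<rho> \<bullet> x}" by simp
    then show ?thesis using Hrep[OF full] by (rule ssubst[rotated])
  qed
  have Xnint: "?X \<notin> interior P"
  proof
    assume "?X \<in> interior P"
    moreover have "v0 \<noteq> 0" using v0(1) ray_of_fan(2)[OF full] unfolding fan_rays_def by auto
    ultimately have "mP P v0 < v0 \<bullet> ?X" using interior_strict[OF full] by blast
    then show False using v0 by simp
  qed
  show XF: "?X \<in> frontier P" using XP Xnint cl by (simp add: frontier_def closure_closed)
  have Xc: "?X = c + (1 / Mxk ?V ?d ?y) *\<^sub>R ?y" by (simp add: Xk_def)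
  have chX: "polytope_chart P ?X = u"
  proof
    fix i
    have nX: "norm (?X - c) = 1 / Mxk ?V ?d ?y" using Xc M y1 by simp
    show "polytope_chart P ?X i = u i"
    proof (cases "i < CARD('n)")
      case True
      have "polytope_chart P ?X i = ((?X - c) $ coord_enum i) / norm (?X - c)"
        using True by (simp add: polytope_chart_def c[symmetric] Let_def)
      also have "\<dots> = ?y $ coord_enum i" using nX M Xc by simp
      also have "\<dots> = u i" using U_ce[OF True] .
      finally show ?thesis .
    next
      case False
      then have "i > CARD('n) - 1" using CARD_ge1[where 'n='n] by linarith
      then have "u i = 0" using u by (simp add: nsphere_top)
      then show ?thesis using False by (simp add: polytope_chart_def Let_def)
    qed
  qed
  have uniq: "z = ?X" if z: "z \<in> frontier P" "polytope_chart P z = u" for z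
  proof -
    have zni: "z \<notin> interior P" using z(1) by (simp add: frontier_def)
    then have zc: "z \<noteq> c" using cin by blast
    define s where "s = norm (z - c)"
    have s0: "0 < s" using zc by (simp add: s_def)
    have comp: "(z - c) $ j = s * ?y $ j" for j
    proof -
      obtain i where i: "i < CARD('n)" "coord_enum i = j"
        using ce_bij[where 'n='n] unfolding bij_betw_def by (metis UNIV_I imageE lessThan_iff)
      have "polytope_chart P z i = ((z - c) $ j) / s"
        using i by (simp add: polytope_chart_def c[symmetric] Let_def s_def)
      then have "((z - c) $ j) / s = ?y $ j" using z(2) U_ce[OF i(1)] i(2) by simp
      then show ?thesis using s0 by (simp add: field_simps)
    qed
    have zeq: "z = c + s *\<^sub>R ?y"
      using comp by (simp add: vec_eq_iff algebra_simps)
    have "s = 1 / Mxk ?V ?d ?y"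
      using ray_unique[OF cv cl cin s0 _ y0, of "1 / Mxk ?V ?d ?y"] M z(1) zeq XF Xc by simp
    then show ?thesis using zeq Xc by simp
  qed
  show "inv_into (frontier P) (polytope_chart P) u = ?X"
    unfolding inv_into_def
  proof (rule someI2[of _ ?X])
    show "?X \<in> frontier P \<and> polytope_chart P ?X = u" using XF chX by simp
  next
    fix z assume "z \<in> frontier P \<and> polytope_chart P z = u"
    then show "z = ?X" using uniq by blast
  qed
qed

lemma cZ: "continuous_map (WW p) (WW p) (\<lambda>x. (0::real, snd x))"
  by (intro continuous_map_pairedI continuous_map_snd) simp

lemma hom1:
  fixes P :: "(real^'n) set"
  assumes full: "full_polytope P" and sc: "simplicial_coloring (normal_fan P) L"
    and f: "compatible_map P L f" and c: "c = (SOME c. c \<in> interior P)"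
  shows "comb_degree P f = Brouwer_degree2 (CARD('n) - 1)
     (\<lambda>u. simplex_chart CARD('n) (Evk CARD('n) L (mP P) (Xk (rv ` fan_rays (normal_fan P)) c (\<lambda>v. v \<bullet> c - mP P v) (U u))))"
proof -
  let ?R = "fan_rays (normal_fan P)"
  let ?V = "rv ` ?R"
  let ?d = "\<lambda>v. v \<bullet> c - mP P v"
  let ?N = "CARD('n)"
  define Xf where "Xf u = Xk ?V c ?d (U u :: real^'n)" for u
  define E where "E u = Evk ?N L (mP P) (Xf u)" for u
  have cin: "c \<in> interior P" unfolding c using fp_basic(5)[OF full] by (simp add: some_in_eq)
  interpret F: fam ?V L c c "mP P" "mP P" using fam_single[OF full sc cin] .
  have dd0: "F.dd 0 = ?d" by (simp add: F.dd_def)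
  have EtE: "F.Et 0 (U u) = E u" for u unfolding E_def Xf_def using F.Et0 by simp
  have fc: "continuous_map (top_of_set (frontier P)) (subtopology (powertop_real UNIV) (simplex_boundary ?N)) f"
    and fG: "\<And>G. G face_of P \<and> G \<noteq> {} \<and> G \<noteq> P \<longrightarrow> f ` G \<subseteq> psi_C P L G"
    using f unfolding compatible_map_def by blast+
  have fci: "continuous_map (top_of_set (frontier P)) euclideanreal (\<lambda>y. f y i)" for i
  proof -
    have "continuous_map (top_of_set (frontier P)) (powertop_real UNIV) f"
      using fc continuous_map_in_subtopology by blast
    then have "continuous_map (top_of_set (frontier P)) euclideanreal ((\<lambda>g. g i) \<circ> f)"
      by (rule continuous_map_compose) (rule continuous_map_product_projection, simp)
    then show ?thesis by (simp add: o_def)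
  qed
  have cMx: "continuous_map (WW (?N - 1)) euclideanreal (\<lambda>x. Mxk ?V ?d (U (snd x) :: real^'n))"
    using continuous_map_compose[OF cZ F.c_Mx] by (simp add: o_def dd0)
  have Mxpos: "0 < Mxk ?V ?d (U (snd x) :: real^'n)" if "x \<in> topspace (WW (?N - 1))" for x
  proof -
    have "snd x \<in> topspace (nsphere (?N - 1))" using that by (auto simp: top_W)
    then have "(0, snd x) \<in> topspace (WW (?N - 1))" by (simp add: top_W)
    then show ?thesis using F.Mx_top_pos[of "(0, snd x)"] by (simp add: dd0)
  qed
  have cX: "continuous_map (WW (?N - 1)) euclidean (\<lambda>x. Xf (snd x))"
  proof (rule continuous_map_vec)
    fix j
    have "continuous_map (WW (?N - 1)) euclideanreal (\<lambda>x. c $ j + (1 / Mxk ?V ?d (U (snd x) :: real^'n)) * (U (snd x) :: real^'n) $ j)"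
    proof (intro continuous_map_add continuous_map_real_mult continuous_map_real_divide cMx continuous_map_canonical_const)
      show "continuous_map (WW (?N - 1)) euclideanreal (\<lambda>x. (U (snd x) :: real^'n) $ j)"
        using continuous_map_compose[OF continuous_map_snd cont_U_comp] by (simp add: o_def)
    next
      fix x assume x: "x \<in> topspace (WW (?N - 1))"
      show "Mxk ?V ?d (U (snd x) :: real^'n) \<noteq> 0" using Mxpos[OF x] by simp
    qed
    then show "continuous_map (WW (?N - 1)) euclideanreal (\<lambda>x. Xf (snd x) $ j)"
      by (simp add: Xf_def Xk_def)
  qed
  have XF: "Xf u \<in> frontier P" if "u \<in> topspace (nsphere (?N - 1))" for u
    using chart_inv(1)[OF full sc c that] by (simp add: Xf_def)
  have cXF: "continuous_map (WW (?N - 1)) (top_of_set (frontier P)) (\<lambda>x. Xf (snd x))"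
    using cX XF by (auto simp: top_W intro!: continuous_map_into_subtopology)
  have cfX: "continuous_map (WW (?N - 1)) euclideanreal (\<lambda>x. f (Xf (snd x)) i)" for i
    using continuous_map_compose[OF cXF fci] by (simp add: o_def)
  have cE: "continuous_map (WW (?N - 1)) euclideanreal (\<lambda>x. E (snd x) i)" for i
    using continuous_map_compose[OF cZ F.c_Et[of i]] by (simp add: o_def EtE)
  define z where "z x = (\<lambda>i. (1 - fst x) * f (Xf (snd x)) i + fst x * E (snd x) i)" for x
  have cz: "continuous_map (WW (?N - 1)) euclideanreal (\<lambda>x. z x i)" for i
    unfolding z_def by (intro continuous_map_add continuous_map_real_mult continuous_map_diff cfst cfX cE continuous_map_canonical_const)
  have vals: "(\<Sum>i\<le>?N. z x i) = 1 \<and> (\<exists>i\<le>?N. z x i = 0)" if x: "x \<in> topspace (WW (?N - 1))" for x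
  proof -
    have u: "snd x \<in> topspace (nsphere (?N - 1))" using x by (auto simp: top_W)
    have y0: "(U (snd x) :: real^'n) \<noteq> 0" using norm_U[OF u] by auto
    let ?X = "Xf (snd x)"
    have XFx: "?X \<in> frontier P" using XF[OF u] .
    have "f ` topspace (top_of_set (frontier P)) \<subseteq> topspace (subtopology (powertop_real UNIV) (simplex_boundary ?N))"
      using fc by (rule continuous_map_image_subset_topspace)
    then have "f ?X \<in> simplex_boundary ?N" using XFx by auto
    then have fs: "f ?X \<in> standard_simplex ?N" by (simp add: simplex_boundary_def)
    then have sf: "(\<Sum>i\<le>?N. f ?X i) = 1" by (simp add: standard_simplex_def)
    have sE: "(\<Sum>i\<le>?N. E (snd x) i) = 1" using F.Et_props(1)[of 0 "U (snd x)"] y0 EtE by simp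
    have "(\<Sum>i\<le>?N. z x i) = (1 - fst x) * (\<Sum>i\<le>?N. f ?X i) + fst x * (\<Sum>i\<le>?N. E (snd x) i)"
      by (simp add: z_def sum.distrib sum_distrib_left)
    also have "\<dots> = 1" using sf sE by simp
    finally have s1: "(\<Sum>i\<le>?N. z x i) = 1" .
    obtain G where G: "G facet_of P" "?X \<in> G" using frontier_facet[OF full XFx] by blast
    let ?\<rho> = "normal_cone P G"
    have rR: "?\<rho> \<in> ?R" using facet_normal_cone[OF full G(1)] .
    have "?R = (\<Union>i\<in>{..?N}. L i)" using sc unfolding simplicial_coloring_def coloring_def by simp
    then obtain i where i: "i \<le> ?N" "?\<rho> \<in> L i" using rR by auto
    have Gsub: "G \<subseteq> color_set P L i" unfolding color_set_def using G(1) i(2) by blast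
    have Gf: "G face_of P" "G \<noteq> {}" "G \<noteq> P" using G(1) by (auto simp: facet_of_def)
    then have "f ` G \<subseteq> psi_C P L G" using fG by blast
    then have "f ?X \<in> simplex_face ?N {i. i \<le> ?N \<and> G \<subseteq> color_set P L i}" using G(2) by (auto simp: psi_C_def)
    then have f0: "f ?X i = 0" using i(1) Gsub by (simp add: simplex_face_def)
    have "rv ?\<rho> \<bullet> ?X - mP P (rv ?\<rho>) = 0" using facet_tight[OF full G] by simp
    then have "eck L (mP P) ?X i = 0"
      unfolding eck_def using F.finL[OF i(1)] i(2) by (intro prod_zero bexI[of _ ?\<rho>])
    then have E0: "E (snd x) i = 0" using i(1) by (simp add: E_def Evk_def)
    have "z x i = 0" using f0 E0 by (simp add: z_def)
    then show ?thesis using s1 i(1) by blast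
  qed
  define h where "h x = simplex_chart ?N (z x)" for x
  have ch: "continuous_map (WW (?N - 1)) (nsphere (?N - 1)) h"
    unfolding h_def by (rule chart_cont[OF CARD_ge1 cz vals[THEN conjunct1] vals[THEN conjunct2]])
  have "Brouwer_degree2 (?N - 1) (simplex_chart ?N \<circ> f \<circ> inv_into (frontier P) (polytope_chart P)) =
        Brouwer_degree2 (?N - 1) (\<lambda>u. simplex_chart ?N (E u))"
  proof (rule hom_deg[OF ch])
    fix u assume u: "u \<in> topspace (nsphere (?N - 1))"
    have "inv_into (frontier P) (polytope_chart P) u = Xf u" using chart_inv(2)[OF full sc c u] by (simp add: Xf_def)
    moreover have "z (0, u) = f (Xf u)" by (simp add: z_def)
    ultimately show "h (0, u) = (simplex_chart ?N \<circ> f \<circ> inv_into (frontier P) (polytope_chart P)) u"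
      by (simp add: h_def)
  next
    fix u assume u: "u \<in> topspace (nsphere (?N - 1))"
    have "z (1, u) = E u" by (simp add: z_def)
    then show "h (1, u) = simplex_chart ?N (E u)" by (simp add: h_def)
  qed
  then show ?thesis by (simp add: comb_degree_def E_def Xf_def)
qed

theorem theorem1p4:
  fixes S S' :: "(real^'n) set set" and L :: "nat \<Rightarrow> (real^'n) set set"
  assumes "projective_fan S" and "projective_fan S'"
    and "fan_refines S' S" and "fan_rays S = fan_rays S'"
    and "simplicial_coloring S L"
  shows "simplicial_coloring S' L \<and>
    (\<forall>P P' f f'. full_polytope P \<and> normal_fan P = S \<and> compatible_map P L f \<and>
                 full_polytope P' \<and> normal_fan P' = S' \<and> compatible_map P' L f'
                 \<longrightarrow> comb_degree P f = comb_degree P' f')"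
proof -
  obtain P0 where P0: "full_polytope P0" "S = normal_fan P0"
    using assms(1) unfolding projective_fan_def by blast
  have sc': "simplicial_coloring S' L"
    using first_conj[OF _ assms(3,4,5)] finite_fan[OF P0(1)] exm_fan[OF P0(1)] P0(2) by blast
  have "comb_degree P f = comb_degree P' f'"
    if H: "full_polytope P" "normal_fan P = S" "compatible_map P L f"
          "full_polytope P'" "normal_fan P' = S'" "compatible_map P' L f'" for P P' f f'
  proof -
    have full1: "full_polytope P" and full2: "full_polytope P'" using H by auto
    have sc1: "simplicial_coloring (normal_fan P) L" using H(2) assms(5) by simp
    have sc2: "simplicial_coloring (normal_fan P') L" using H(5) sc' by simp
    have ref: "fan_refines (normal_fan P') (normal_fan P)" using H(2,5) assms(3) by simp
    have rays: "fan_rays (normal_fan P) = fan_rays (normal_fan P')" using H(2,5) assms(4) by simp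
    define c where "c = (SOME c. c \<in> interior P)"
    define c' where "c' = (SOME c. c \<in> interior P')"
    have cin: "c \<in> interior P" unfolding c_def using fp_basic(5)[OF full1] by (simp add: some_in_eq)
    have cin': "c' \<in> interior P'" unfolding c'_def using fp_basic(5)[OF full2] by (simp add: some_in_eq)
    let ?V = "rv ` fan_rays (normal_fan P')"
    have VV: "rv ` fan_rays (normal_fan P) = ?V" using rays by simp
    have d1: "comb_degree P f = Brouwer_degree2 (CARD('n) - 1)
       (\<lambda>u. simplex_chart CARD('n) (Evk CARD('n) L (mP P) (Xk ?V c (\<lambda>v. v \<bullet> c - mP P v) (U u))))"
      using hom1[OF full1 sc1 H(3) c_def] VV by simp
    have d2: "comb_degree P' f' = Brouwer_degree2 (CARD('n) - 1)
       (\<lambda>u. simplex_chart CARD('n) (Evk CARD('n) L (mP P') (Xk ?V c' (\<lambda>v. v \<bullet> c' - mP P' v) (U u))))"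
      using hom1[OF full2 sc2 H(6) c'_def] by simp
    interpret F: fam ?V L c c' "mP P" "mP P'"
      using fam_pair[OF full1 full2 ref rays sc1 sc2 cin cin'] .
    have "Brouwer_degree2 (CARD('n) - 1)
       (\<lambda>u. simplex_chart CARD('n) (Evk CARD('n) L (mP P) (Xk ?V c (\<lambda>v. v \<bullet> c - mP P v) (U u)))) =
          Brouwer_degree2 (CARD('n) - 1)
       (\<lambda>u. simplex_chart CARD('n) (Evk CARD('n) L (mP P') (Xk ?V c' (\<lambda>v. v \<bullet> c' - mP P' v) (U u))))"
    proof (rule hom_deg[OF F.cont_Hm])
      fix u
      show "F.Hm (0, u) = simplex_chart CARD('n) (Evk CARD('n) L (mP P) (Xk ?V c (\<lambda>v. v \<bullet> c - mP P v) (U u)))"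
        by (simp add: F.Hm_def F.Et0)
      show "F.Hm (1, u) = simplex_chart CARD('n) (Evk CARD('n) L (mP P') (Xk ?V c' (\<lambda>v. v \<bullet> c' - mP P' v) (U u)))"
        by (simp add: F.Hm_def F.Et1)
    qed
    then show ?thesis using d1 d2 by simp
  qed
  then show ?thesis using sc' by blast
qed

end
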